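(* For a commutative ring $R$ with nilradical $\mathfrak N$ the following are equivalent: (i) $R$ is a GPP-ring; (ii) $R$ is a GPF-ring and $\operatorname{Min}(R)$ is Zariski quasi-compact; (iii) $R$ is a quasi p.f. ring and $\operatorname{Min}(R)$ is Zariski quasi-compact; (iv) $R/\mathfrak N$ is a p.p. ring and $R_{\mathfrak m}$ is a primary ring for every maximal ideal $\mathfrak m$ of $R$.
   Context: $A$ is a p.p. ring if every principal ideal is projective. $R$ is a GPP-ring (resp. GPF-ring) if for each $f\in R$ there is $n\geq1$ with $Rf^n$ projective (resp. flat). An ideal $I$ is quasi-pure if for each $f\in I$ there is $g\in I$ with $f(1-g)$ nilpotent; $R$ is quasi p.f. if $\operatorname{Ann}(f)$ is quasi-pure for all $f$. A ring is primary if its zero ideal is primary (every zero-divisor nilpotent). $\operatorname{Min}(R)$ is the set of minimal primes with the subspace Zariski topology. *)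

theory Defs
  imports "HOL-Algebra.QuotRing"
begin

definition nilpotent_el :: "('a, 'm) ring_scheme \<Rightarrow> 'a \<Rightarrow> bool" where
  "nilpotent_el R x \<longleftrightarrow> x \<in> carrier R \<and> (\<exists>n::nat. x [^]\<^bsub>R\<^esub> n = \<zero>\<^bsub>R\<^esub>)"

definition nilradical :: "('a, 'm) ring_scheme \<Rightarrow> 'a set" where
  "nilradical R = {x \<in> carrier R. nilpotent_el R x}"

definition annihilator :: "('a, 'm) ring_scheme \<Rightarrow> 'a \<Rightarrow> 'a set" where
  "annihilator R f = {g \<in> carrier R. g \<otimes>\<^bsub>R\<^esub> f = \<zero>\<^bsub>R\<^esub>}"

definition free_mod :: "('a, 'm) ring_scheme \<Rightarrow> 'b set \<Rightarrow> ('b \<Rightarrow> 'a) set" where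
  "free_mod R Bs = {c. (\<forall>x\<in>Bs. c x \<in> carrier R) \<and> (\<forall>x. x \<notin> Bs \<longrightarrow> c x = \<zero>\<^bsub>R\<^esub>)
                       \<and> finite {x \<in> Bs. c x \<noteq> \<zero>\<^bsub>R\<^esub>}}"

text \<open>An ideal I (viewed as R-module) is projective iff it is a direct summand of a free
  R-module, i.e. there is a free module F = R^(Bs) together with R-linear maps
  s : I \<rightarrow> F and p : F \<rightarrow> I with p \<circ> s = id.  An R-linear map p : R^(Bs) \<rightarrow> I is determined by
  the images g x \<in> I of the basis vectors: p c = \<Sum>_x c x \<cdot> g x.  Since I is generated by
  its own elements, an index set Bs inside the carrier type suffices.\<close>
definition projective_ideal :: "('a, 'm) ring_scheme \<Rightarrow> 'a set \<Rightarrow> bool" where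
  "projective_ideal R I \<longleftrightarrow>
     (\<exists>(Bs :: 'a set) (g :: 'a \<Rightarrow> 'a) (s :: 'a \<Rightarrow> 'a \<Rightarrow> 'a).
        (\<forall>x\<in>Bs. g x \<in> I)
      \<and> (\<forall>u\<in>I. s u \<in> free_mod R Bs)
      \<and> (\<forall>u\<in>I. \<forall>v\<in>I. \<forall>x\<in>Bs. s (u \<oplus>\<^bsub>R\<^esub> v) x = s u x \<oplus>\<^bsub>R\<^esub> s v x)
      \<and> (\<forall>a\<in>carrier R. \<forall>u\<in>I. \<forall>x\<in>Bs. s (a \<otimes>\<^bsub>R\<^esub> u) x = a \<otimes>\<^bsub>R\<^esub> s u x)
      \<and> (\<forall>u\<in>I. finsum R (\<lambda>x. s u x \<otimes>\<^bsub>R\<^esub> g x) {x \<in> Bs. s u x \<noteq> \<zero>\<^bsub>R\<^esub>} = u))"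

text \<open>Flatness of an ideal I (as R-module), via the equational criterion for flatness:
  every R-linear relation \<Sum> r_i x_i = 0 among elements x_i of I is trivial, i.e.
  x_i = \<Sum>_j a_ij y_j with y_j \<in> I and \<Sum>_i r_i a_ij = 0 for all j.\<close>
definition flat_ideal :: "('a, 'm) ring_scheme \<Rightarrow> 'a set \<Rightarrow> bool" where
  "flat_ideal R I \<longleftrightarrow>
     (\<forall>(n::nat) r x. (\<forall>i<n. r i \<in> carrier R \<and> x i \<in> I)
        \<and> finsum R (\<lambda>i. r i \<otimes>\<^bsub>R\<^esub> x i) {..<n} = \<zero>\<^bsub>R\<^esub> \<longrightarrow>
        (\<exists>(m::nat) a y. (\<forall>j<m. y j \<in> I) \<and> (\<forall>i<n. \<forall>j<m. a i j \<in> carrier R)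
          \<and> (\<forall>i<n. x i = finsum R (\<lambda>j. a i j \<otimes>\<^bsub>R\<^esub> y j) {..<m})
          \<and> (\<forall>j<m. finsum R (\<lambda>i. r i \<otimes>\<^bsub>R\<^esub> a i j) {..<n} = \<zero>\<^bsub>R\<^esub>)))"

definition pp_ring :: "('a, 'm) ring_scheme \<Rightarrow> bool" where
  "pp_ring R \<longleftrightarrow> (\<forall>f\<in>carrier R. projective_ideal R (PIdl\<^bsub>R\<^esub> f))"

definition GPP_ring :: "('a, 'm) ring_scheme \<Rightarrow> bool" where
  "GPP_ring R \<longleftrightarrow> (\<forall>f\<in>carrier R. \<exists>n::nat. n \<ge> 1 \<and> projective_ideal R (PIdl\<^bsub>R\<^esub> (f [^]\<^bsub>R\<^esub> n)))"

definition GPF_ring :: "('a, 'm) ring_scheme \<Rightarrow> bool" where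
  "GPF_ring R \<longleftrightarrow> (\<forall>f\<in>carrier R. \<exists>n::nat. n \<ge> 1 \<and> flat_ideal R (PIdl\<^bsub>R\<^esub> (f [^]\<^bsub>R\<^esub> n)))"

definition quasi_pure :: "('a, 'm) ring_scheme \<Rightarrow> 'a set \<Rightarrow> bool" where
  "quasi_pure R I \<longleftrightarrow>
     (\<forall>f\<in>I. \<exists>g\<in>I. nilpotent_el R (f \<otimes>\<^bsub>R\<^esub> (\<one>\<^bsub>R\<^esub> \<ominus>\<^bsub>R\<^esub> g)))"

definition quasi_pf_ring :: "('a, 'm) ring_scheme \<Rightarrow> bool" where
  "quasi_pf_ring R \<longleftrightarrow> (\<forall>f\<in>carrier R. quasi_pure R (annihilator R f))"

text \<open>Primary ring: the zero ideal is primary (proper, and every zero-divisor is nilpotent).\<close>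
definition primary_ring :: "('a, 'm) ring_scheme \<Rightarrow> bool" where
  "primary_ring R \<longleftrightarrow> \<one>\<^bsub>R\<^esub> \<noteq> \<zero>\<^bsub>R\<^esub> \<and>
     (\<forall>a\<in>carrier R. \<forall>b\<in>carrier R. a \<otimes>\<^bsub>R\<^esub> b = \<zero>\<^bsub>R\<^esub> \<longrightarrow> a = \<zero>\<^bsub>R\<^esub> \<or> nilpotent_el R b)"

definition min_primes :: "('a, 'm) ring_scheme \<Rightarrow> 'a set set" where
  "min_primes R = {P. primeideal P R \<and> (\<forall>Q. primeideal Q R \<and> Q \<subseteq> P \<longrightarrow> Q = P)}"

definition zariski_open :: "('a, 'm) ring_scheme \<Rightarrow> 'a set set \<Rightarrow> bool" where
  "zariski_open R U \<longleftrightarrow> (\<exists>S \<subseteq> carrier R. U = {P. primeideal P R \<and> \<not> S \<subseteq> P})"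

text \<open>Min(R) is quasi-compact in the subspace topology: every cover of Min(R) by (traces of)
  Zariski-open sets has a finite subcover.\<close>
definition min_quasi_compact :: "('a, 'm) ring_scheme \<Rightarrow> bool" where
  "min_quasi_compact R \<longleftrightarrow>
     (\<forall>\<U>. (\<forall>U\<in>\<U>. zariski_open R U) \<and> min_primes R \<subseteq> \<Union>\<U> \<longrightarrow>
        (\<exists>\<F>\<subseteq>\<U>. finite \<F> \<and> min_primes R \<subseteq> \<Union>\<F>))"

definition loc_rel :: "('a, 'm) ring_scheme \<Rightarrow> 'a set \<Rightarrow> (('a \<times> 'a) \<times> ('a \<times> 'a)) set" where
  "loc_rel R P = {((a, s), (b, t)). a \<in> carrier R \<and> b \<in> carrier R
      \<and> s \<in> carrier R - P \<and> t \<in> carrier R - P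
      \<and> (\<exists>u\<in>carrier R - P. u \<otimes>\<^bsub>R\<^esub> (a \<otimes>\<^bsub>R\<^esub> t \<ominus>\<^bsub>R\<^esub> b \<otimes>\<^bsub>R\<^esub> s) = \<zero>\<^bsub>R\<^esub>)}"

definition loc_class :: "('a, 'm) ring_scheme \<Rightarrow> 'a set \<Rightarrow> 'a \<Rightarrow> 'a \<Rightarrow> ('a \<times> 'a) set" where
  "loc_class R P a s = loc_rel R P `` {(a, s)}"

definition loc_mult :: "('a, 'm) ring_scheme \<Rightarrow> 'a set \<Rightarrow> ('a \<times> 'a) set \<Rightarrow> ('a \<times> 'a) set \<Rightarrow> ('a \<times> 'a) set" where
  "loc_mult R P U V = \<Union>{loc_class R P (a \<otimes>\<^bsub>R\<^esub> b) (s \<otimes>\<^bsub>R\<^esub> t) | a s b t. (a, s) \<in> U \<and> (b, t) \<in> V}"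

definition loc_add :: "('a, 'm) ring_scheme \<Rightarrow> 'a set \<Rightarrow> ('a \<times> 'a) set \<Rightarrow> ('a \<times> 'a) set \<Rightarrow> ('a \<times> 'a) set" where
  "loc_add R P U V = \<Union>{loc_class R P (a \<otimes>\<^bsub>R\<^esub> t \<oplus>\<^bsub>R\<^esub> b \<otimes>\<^bsub>R\<^esub> s) (s \<otimes>\<^bsub>R\<^esub> t) | a s b t. (a, s) \<in> U \<and> (b, t) \<in> V}"

definition localization :: "('a, 'm) ring_scheme \<Rightarrow> 'a set \<Rightarrow> ('a \<times> 'a) set ring" where
  "localization R P =
    \<lparr> carrier = (carrier R \<times> (carrier R - P)) // loc_rel R P,
      mult = loc_mult R P,
      one = loc_class R P \<one>\<^bsub>R\<^esub> \<one>\<^bsub>R\<^esub>,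
      zero = loc_class R P \<zero>\<^bsub>R\<^esub> \<one>\<^bsub>R\<^esub>,
      add = loc_add R P \<rparr>"

end

theory Submission
  imports Defs "HOL-Algebra.Ring_Divisibility"
begin


context cring begin

lemma id_add: "ideal I R \<Longrightarrow> a \<in> I \<Longrightarrow> b \<in> I \<Longrightarrow> a \<oplus> b \<in> I"
  by (meson additive_subgroup.a_closed ideal.axioms(1))
lemma id_lm: "ideal I R \<Longrightarrow> a \<in> I \<Longrightarrow> x \<in> carrier R \<Longrightarrow> x \<otimes> a \<in> I"
  by (meson ideal.I_l_closed)
lemma id_rm: "ideal I R \<Longrightarrow> a \<in> I \<Longrightarrow> x \<in> carrier R \<Longrightarrow> a \<otimes> x \<in> I"
  by (meson ideal.I_r_closed)

lemma prime_one_notin: assumes "primeideal P R" shows "\<one> \<notin> P"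
proof
  assume "\<one> \<in> P"
  then have "P = carrier R" using assms by (simp add: ideal.one_imp_carrier primeideal.axioms(1))
  then show False using primeideal.I_notcarr[OF assms] by simp
qed

lemma prime_sub: "primeideal P R \<Longrightarrow> P \<subseteq> carrier R"
  by (meson additive_subgroup.a_subset ideal.axioms(1) primeideal.axioms(1))

lemma prime_zero: "primeideal P R \<Longrightarrow> \<zero> \<in> P"
  by (meson additive_subgroup.zero_closed ideal.axioms(1) primeideal.axioms(1))

lemma prime_lmult: "primeideal P R \<Longrightarrow> a \<in> P \<Longrightarrow> x \<in> carrier R \<Longrightarrow> x \<otimes> a \<in> P"
  by (meson ideal.I_l_closed primeideal.axioms(1))

lemma prime_rmult: "primeideal P R \<Longrightarrow> a \<in> P \<Longrightarrow> x \<in> carrier R \<Longrightarrow> a \<otimes> x \<in> P"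
  by (meson ideal.I_r_closed primeideal.axioms(1))

lemma prime_add: "primeideal P R \<Longrightarrow> a \<in> P \<Longrightarrow> b \<in> P \<Longrightarrow> a \<oplus> b \<in> P"
  by (meson additive_subgroup.a_closed ideal.axioms(1) primeideal.axioms(1))

lemma prime_minus: "primeideal P R \<Longrightarrow> a \<in> P \<Longrightarrow> b \<in> P \<Longrightarrow> a \<ominus> b \<in> P"
  by (metis a_minus_def additive_subgroup.a_closed additive_subgroup.a_inv_closed ideal.axioms(1) primeideal.axioms(1))

lemma prime_mult_notin: "primeideal P R \<Longrightarrow> a \<in> carrier R - P \<Longrightarrow> b \<in> carrier R - P \<Longrightarrow> a \<otimes> b \<in> carrier R - P"
  using primeideal.I_prime by fastforce

lemma prime_pow: assumes "primeideal P R" "x \<in> carrier R" "x [^] (n::nat) \<in> P" shows "x \<in> P"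
  using assms(3)
proof (induction n)
  case 0 then show ?case using prime_one_notin[OF assms(1)] by simp
next
  case (Suc n)
  have "x [^] n \<otimes> x \<in> P" using Suc.prems by simp
  then have "x [^] n \<in> P \<or> x \<in> P" using primeideal.I_prime[OF assms(1)] assms(2) by simp
  then show ?case using Suc.IH by blast
qed

lemma prime_pow_notin: "primeideal P R \<Longrightarrow> x \<in> carrier R - P \<Longrightarrow> x [^] (n::nat) \<in> carrier R - P"
  using prime_pow by blast

lemma nil_in_prime: assumes "primeideal P R" "nilpotent_el R x" shows "x \<in> P"
proof -
  obtain n where "x \<in> carrier R" "x [^] (n::nat) = \<zero>" using assms(2) by (auto simp: nilpotent_el_def)
  then show ?thesis using prime_pow[OF assms(1)] prime_zero[OF assms(1)] by metis
qed

lemma prime_one_minus: "primeideal P R \<Longrightarrow> e \<in> P \<Longrightarrow> \<one> \<ominus> e \<in> P \<Longrightarrow> False"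
proof -
  assume P: "primeideal P R" "e \<in> P" "\<one> \<ominus> e \<in> P"
  have "e \<in> carrier R" using P prime_sub by blast
  then have "\<one> = e \<oplus> (\<one> \<ominus> e)" by algebra
  then show False using prime_add[OF P(1) P(2) P(3)] prime_one_notin[OF P(1)] by simp
qed

lemma prime_e_or: "primeideal P R \<Longrightarrow> e \<in> carrier R \<Longrightarrow> e \<otimes> (\<one> \<ominus> e) \<in> P \<Longrightarrow> e \<in> P \<or> \<one> \<ominus> e \<in> P"
  using primeideal.I_prime by (metis minus_closed one_closed)

lemma ideal_max_disjoint:
  assumes I: "ideal I R" "I \<inter> S = {}"
  shows "\<exists>M. ideal M R \<and> I \<subseteq> M \<and> M \<inter> S = {} \<and> (\<forall>J. ideal J R \<and> M \<subseteq> J \<and> J \<inter> S = {} \<longrightarrow> J = M)"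
proof -
  let ?A = "{J. ideal J R \<and> I \<subseteq> J \<and> J \<inter> S = {}}"
  have "\<exists>M\<in>?A. \<forall>X\<in>?A. M \<subseteq> X \<longrightarrow> X = M"
  proof (rule subset_Zorn)
    fix C assume C: "subset.chain ?A C"
    show "\<exists>U\<in>?A. \<forall>X\<in>C. X \<subseteq> U"
    proof (cases "C = {}")
      case True then show ?thesis using I by (intro bexI[of _ I]) auto
    next
      case False
      have ch: "subset.chain {I. ideal I R} C" using C unfolding subset_chain_def by auto
      have "ideal (\<Union>C) R" using chain_Union_is_ideal[OF ch] False by simp
      moreover have "I \<subseteq> \<Union>C"
      proof -
        from False obtain X where "X \<in> C" by auto
        moreover have "I \<subseteq> X" using calculation C unfolding subset_chain_def by auto
        ultimately show ?thesis by auto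
      qed
      moreover have "\<Union>C \<inter> S = {}" using C unfolding subset_chain_def by auto
      ultimately show ?thesis by (intro bexI[of _ "\<Union>C"]) auto
    qed
  qed
  then obtain M where M1: "M \<in> ?A" and M2: "\<forall>X\<in>?A. M \<subseteq> X \<longrightarrow> X = M" ..
  show ?thesis
  proof (rule exI[of _ M], intro conjI allI impI)
    fix J assume "ideal J R \<and> M \<subseteq> J \<and> J \<inter> S = {}"
    then have "J \<in> ?A" "M \<subseteq> J" using M1 by auto
    then show "J = M" using M2 by blast
  qed (use M1 in auto)
qed

lemma exists_prime_disjoint:
  assumes S: "S \<subseteq> carrier R" "\<one> \<in> S" "\<And>a b. a \<in> S \<Longrightarrow> b \<in> S \<Longrightarrow> a \<otimes> b \<in> S" "\<zero> \<notin> S"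
  shows "\<exists>P. primeideal P R \<and> P \<inter> S = {}"
proof -
  obtain M where M: "ideal M R" "M \<inter> S = {}" and Mmax: "\<And>J. ideal J R \<Longrightarrow> M \<subseteq> J \<Longrightarrow> J \<inter> S = {} \<Longrightarrow> J = M"
    using ideal_max_disjoint[of "{\<zero>}" S] zeroideal S(4) by auto
  have Msub: "M \<subseteq> carrier R" using M(1) by (simp add: ideal.Icarr subsetI)
  have "primeideal M R"
  proof (rule primeidealI[OF M(1) is_cring])
    show "carrier R \<noteq> M" using M S by auto
  next
    fix a b assume ab: "a \<in> carrier R" "b \<in> carrier R" "a \<otimes> b \<in> M"
    show "a \<in> M \<or> b \<in> M"
    proof (rule ccontr)
      assume nab: "\<not> (a \<in> M \<or> b \<in> M)"
      have big: "(M <+>\<^bsub>R\<^esub> PIdl x) \<inter> S \<noteq> {}" if "x \<in> carrier R" "x \<notin> M" for x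
      proof
        assume "(M <+>\<^bsub>R\<^esub> PIdl x) \<inter> S = {}"
        moreover have "ideal (M <+>\<^bsub>R\<^esub> PIdl x) R" using add_ideals[OF M(1) cgenideal_ideal[OF that(1)]] .
        moreover have "M \<subseteq> M <+>\<^bsub>R\<^esub> PIdl x"
        proof
          fix m assume "m \<in> M"
          then have "m = m \<oplus> \<zero> \<otimes> x" using Msub that(1) by auto
          moreover have "\<zero> \<otimes> x \<in> PIdl x" unfolding cgenideal_def by blast
          ultimately show "m \<in> M <+>\<^bsub>R\<^esub> PIdl x" using \<open>m \<in> M\<close> unfolding set_add_def' by blast
        qed
        ultimately have "M <+>\<^bsub>R\<^esub> PIdl x = M" using Mmax by blast
        moreover have "x \<in> M <+>\<^bsub>R\<^esub> PIdl x"
        proof -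
          have "x = \<zero> \<oplus> \<one> \<otimes> x" using that(1) by simp
          moreover have "\<one> \<otimes> x \<in> PIdl x" unfolding cgenideal_def by blast
          moreover have "\<zero> \<in> M" by (simp add: M(1) additive_subgroup.zero_closed ideal.axioms(1))
          ultimately show ?thesis unfolding set_add_def' by blast
        qed
        ultimately show False using that by simp
      qed
      obtain s1 where s1: "s1 \<in> S" "s1 \<in> M <+>\<^bsub>R\<^esub> PIdl a" using big[of a] ab nab by blast
      obtain s2 where s2: "s2 \<in> S" "s2 \<in> M <+>\<^bsub>R\<^esub> PIdl b" using big[of b] ab nab by blast
      obtain p1 r1 where pr1: "p1 \<in> M" "r1 \<in> carrier R" "s1 = p1 \<oplus> r1 \<otimes> a"
        using s2 s1(2) unfolding set_add_def' cgenideal_def by blast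
      obtain p2 r2 where pr2: "p2 \<in> M" "r2 \<in> carrier R" "s2 = p2 \<oplus> r2 \<otimes> b"
        using s2(2) unfolding set_add_def' cgenideal_def by blast
      have c: "p1 \<in> carrier R" "p2 \<in> carrier R" using pr1 pr2 Msub by auto
      have eq: "s1 \<otimes> s2 = p1 \<otimes> (p2 \<oplus> r2 \<otimes> b) \<oplus> (r1 \<otimes> (a \<otimes> p2) \<oplus> (r1 \<otimes> r2) \<otimes> (a \<otimes> b))"
        using pr1 pr2 c ab by algebra
      have t1: "p1 \<otimes> (p2 \<oplus> r2 \<otimes> b) \<in> M" using id_rm[OF M(1) pr1(1)] pr2 ab c by simp
      have t2: "r1 \<otimes> (a \<otimes> p2) \<in> M" using id_lm[OF M(1) id_lm[OF M(1) pr2(1) ab(1)] pr1(2)] .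
      have t3: "(r1 \<otimes> r2) \<otimes> (a \<otimes> b) \<in> M" using id_lm[OF M(1) ab(3)] pr1(2) pr2(2) by simp
      have "s1 \<otimes> s2 \<in> M"
        unfolding eq using id_add[OF M(1) t1 id_add[OF M(1) t2 t3]] .
      then show False using s1 s2 S(3) M(2) by blast
    qed
  qed
  then show ?thesis using M by blast
qed

lemma exists_maximal_containing:
  assumes "ideal I R" "\<one> \<notin> I"
  shows "\<exists>M. maximalideal M R \<and> I \<subseteq> M"
proof -
  obtain M where M: "ideal M R" "I \<subseteq> M" "M \<inter> {\<one>} = {}" and Mmax: "\<And>J. ideal J R \<Longrightarrow> M \<subseteq> J \<Longrightarrow> J \<inter> {\<one>} = {} \<Longrightarrow> J = M"
    using ideal_max_disjoint[of I "{\<one>}"] assms by auto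
  have "maximalideal M R"
  proof (rule maximalidealI[OF M(1)])
    show "carrier R \<noteq> M" using M by auto
  next
    fix J assume J: "ideal J R" "M \<subseteq> J" "J \<subseteq> carrier R"
    show "J = M \<or> J = carrier R"
    proof (cases "\<one> \<in> J")
      case True then show ?thesis using ideal.one_imp_carrier[OF J(1)] by blast
    next
      case False then show ?thesis using Mmax J by blast
    qed
  qed
  then show ?thesis using M by blast
qed

lemma local_global_zero:
  assumes x: "x \<in> carrier R" and H: "\<And>M. maximalideal M R \<Longrightarrow> \<exists>u\<in>carrier R - M. u \<otimes> x = \<zero>"
  shows "x = \<zero>"
proof (rule ccontr)
  assume nz: "x \<noteq> \<zero>"
  let ?I = "annihilator R x"
  have "ideal ?I R"
  proof (rule idealI[OF ring_axioms])
    show "subgroup ?I (add_monoid R)"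
    proof
      show "?I \<subseteq> carrier (add_monoid R)" unfolding annihilator_def by auto
      show "\<one>\<^bsub>add_monoid R\<^esub> \<in> ?I" unfolding annihilator_def using x by auto
      fix a b assume "a \<in> ?I" "b \<in> ?I"
      then show "a \<otimes>\<^bsub>add_monoid R\<^esub> b \<in> ?I" unfolding annihilator_def using x by (auto simp: l_distr)
    next
      fix a assume "a \<in> ?I"
      then show "inv\<^bsub>add_monoid R\<^esub> a \<in> ?I" unfolding annihilator_def using x
        by (auto simp: l_minus simp flip: a_inv_def)
    qed
  next
    fix a b assume "a \<in> ?I" "b \<in> carrier R"
    then show "b \<otimes> a \<in> ?I" "a \<otimes> b \<in> ?I" unfolding annihilator_def using x
      by (auto simp: m_assoc) (metis m_assoc m_comm r_null)
  qed
  moreover have "\<one> \<notin> ?I" using nz x unfolding annihilator_def by auto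
  ultimately obtain M where M: "maximalideal M R" "?I \<subseteq> M" using exists_maximal_containing by blast
  obtain u where "u \<in> carrier R - M" "u \<otimes> x = \<zero>" using H[OF M(1)] by blast
  then show False using M(2) unfolding annihilator_def by auto
qed

end



context cring begin

lemma chain_Inter_prime:
  assumes D: "D \<noteq> {}" "\<And>Q. Q \<in> D \<Longrightarrow> primeideal Q R" "\<And>Q1 Q2. Q1 \<in> D \<Longrightarrow> Q2 \<in> D \<Longrightarrow> Q1 \<subseteq> Q2 \<or> Q2 \<subseteq> Q1"
  shows "primeideal (\<Inter>D) R"
proof (rule primeidealI[OF i_Intersect is_cring])
  show "\<And>I. I \<in> D \<Longrightarrow> ideal I R" using D(2) primeideal.axioms(1) by blast
  show "D \<noteq> {}" by fact
  obtain Q0 where "Q0 \<in> D" using D(1) by blast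
  then have "\<one> \<notin> \<Inter>D" using prime_one_notin[OF D(2)] by blast
  then show "carrier R \<noteq> \<Inter>D" by auto
next
  fix a b assume ab: "a \<in> carrier R" "b \<in> carrier R" "a \<otimes> b \<in> \<Inter>D"
  show "a \<in> \<Inter>D \<or> b \<in> \<Inter>D"
  proof (rule ccontr)
    assume "\<not> (a \<in> \<Inter>D \<or> b \<in> \<Inter>D)"
    then obtain Q1 Q2 where Q: "Q1 \<in> D" "a \<notin> Q1" "Q2 \<in> D" "b \<notin> Q2" by blast
    have p1: "a \<in> Q1 \<or> b \<in> Q1" using primeideal.I_prime[OF D(2)[OF Q(1)] ab(1,2)] ab(3) Q(1) by blast
    have p2: "a \<in> Q2 \<or> b \<in> Q2" using primeideal.I_prime[OF D(2)[OF Q(3)] ab(1,2)] ab(3) Q(3) by blast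
    show False using D(3)[OF Q(1) Q(3)] p1 p2 Q by blast
  qed
qed

lemma exists_min_prime_below:
  assumes P: "primeideal P R"
  shows "\<exists>Q\<in>min_primes R. Q \<subseteq> P"
proof -
  let ?A = "{X. \<exists>Q. primeideal Q R \<and> Q \<subseteq> P \<and> X = carrier R - Q}"
  have "\<exists>M\<in>?A. \<forall>X\<in>?A. M \<subseteq> X \<longrightarrow> X = M"
  proof (rule subset_Zorn)
    fix C assume C: "subset.chain ?A C"
    show "\<exists>U\<in>?A. \<forall>X\<in>C. X \<subseteq> U"
    proof (cases "C = {}")
      case True
      have "carrier R - P \<in> ?A" using P by blast
      then show ?thesis using True by (intro bexI[of _ "carrier R - P"]) auto
    next
      case False
      let ?D = "(\<lambda>X. carrier R - X) ` C"
      have CA: "C \<subseteq> ?A" using C unfolding subset_chain_def by blast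
      have Dp: "\<And>Q. Q \<in> ?D \<Longrightarrow> primeideal Q R \<and> Q \<subseteq> P"
      proof -
        fix Q assume "Q \<in> ?D"
        then obtain X where X: "X \<in> C" "Q = carrier R - X" by blast
        then obtain Q' where Q': "primeideal Q' R" "Q' \<subseteq> P" "X = carrier R - Q'" using CA by blast
        have "Q = Q'" using X(2) Q'(3) prime_sub[OF Q'(1)] by blast
        then show "primeideal Q R \<and> Q \<subseteq> P" using Q' by simp
      qed
      have Dch: "\<And>Q1 Q2. Q1 \<in> ?D \<Longrightarrow> Q2 \<in> ?D \<Longrightarrow> Q1 \<subseteq> Q2 \<or> Q2 \<subseteq> Q1"
      proof -
        fix Q1 Q2 assume "Q1 \<in> ?D" "Q2 \<in> ?D"
        then obtain X1 X2 where "X1 \<in> C" "X2 \<in> C" "Q1 = carrier R - X1" "Q2 = carrier R - X2" by blast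
        moreover have "X1 \<subseteq> X2 \<or> X2 \<subseteq> X1" using C calculation(1,2) unfolding subset_chain_def by blast
        ultimately show "Q1 \<subseteq> Q2 \<or> Q2 \<subseteq> Q1" by blast
      qed
      have DI: "primeideal (\<Inter>?D) R" by (rule chain_Inter_prime) (use False Dp Dch in auto)
      have "\<Inter>?D \<subseteq> P"
      proof -
        obtain X where "X \<in> C" using False by blast
        then have "carrier R - X \<in> ?D" by blast
        then show ?thesis using Dp by blast
      qed
      then have "carrier R - \<Inter>?D \<in> ?A" using DI by blast
      moreover have "\<forall>X\<in>C. X \<subseteq> carrier R - \<Inter>?D"
      proof
        fix X assume X: "X \<in> C"
        then obtain Q' where Q': "primeideal Q' R" "X = carrier R - Q'" using CA by blast
        have "carrier R - X \<in> ?D" using X by blast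
        then show "X \<subseteq> carrier R - \<Inter>?D" using Q' by blast
      qed
      ultimately show ?thesis by (intro bexI[of _ "carrier R - \<Inter>?D"])
    qed
  qed
  then obtain M where M1: "M \<in> ?A" and M2: "\<forall>X\<in>?A. M \<subseteq> X \<longrightarrow> X = M" ..
  obtain Q where Q: "primeideal Q R" "Q \<subseteq> P" "M = carrier R - Q" using M1 by blast
  have "Q \<in> min_primes R"
    unfolding min_primes_def
  proof (intro CollectI conjI allI impI)
    show "primeideal Q R" by fact
    fix Q' assume Q': "primeideal Q' R \<and> Q' \<subseteq> Q"
    have "carrier R - Q' \<in> ?A" using Q' Q(2) by blast
    moreover have "M \<subseteq> carrier R - Q'" using Q' Q(3) by blast
    ultimately have "carrier R - Q' = M" using M2 by blast
    then have "carrier R - Q' = carrier R - Q" using Q(3) by simp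
    then show "Q' = Q" using prime_sub[OF Q(1)] prime_sub[of Q'] Q' by blast
  qed
  then show ?thesis using Q(2) by blast
qed

lemma min_primes_prime: "Q \<in> min_primes R \<Longrightarrow> primeideal Q R"
  unfolding min_primes_def by blast

lemma min_prime_disjoint:
  assumes S: "S \<subseteq> carrier R" "\<one> \<in> S" "\<And>a b. a \<in> S \<Longrightarrow> b \<in> S \<Longrightarrow> a \<otimes> b \<in> S" "\<zero> \<notin> S"
  shows "\<exists>Q\<in>min_primes R. Q \<inter> S = {}"
proof -
  obtain P where P: "primeideal P R" "P \<inter> S = {}" using exists_prime_disjoint[OF S] by blast
  obtain Q where "Q \<in> min_primes R" "Q \<subseteq> P" using exists_min_prime_below[OF P(1)] by blast
  then show ?thesis using P(2) by blast
qed

lemma min_prime_elem: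
  assumes Q: "Q \<in> min_primes R" and x: "x \<in> Q"
  shows "\<exists>s\<in>carrier R - Q. \<exists>k::nat. s \<otimes> x [^] k = \<zero>"
proof (rule ccontr)
  assume H: "\<not> ?thesis"
  have Qp: "primeideal Q R" using Q min_primes_prime by blast
  have xc: "x \<in> carrier R" using x prime_sub[OF Qp] by blast
  let ?S = "{s \<otimes> x [^] (k::nat) | s k. s \<in> carrier R - Q}"
  have "\<exists>P. primeideal P R \<and> P \<inter> ?S = {}"
  proof (rule exists_prime_disjoint)
    show "?S \<subseteq> carrier R" using xc by auto
    have "\<one> = \<one> \<otimes> x [^] (0::nat)" by simp
    then show "\<one> \<in> ?S" using prime_one_notin[OF Qp] by blast
    show "\<zero> \<notin> ?S"
    proof
      assume "\<zero> \<in> ?S"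
      then obtain s k where sk: "s \<in> carrier R - Q" "\<zero> = s \<otimes> x [^] (k::nat)" by blast
      then show False using H by (metis (no_types, lifting))
    qed
  next
    fix a b assume "a \<in> ?S" "b \<in> ?S"
    then obtain s1 k1 s2 k2 where sk: "s1 \<in> carrier R - Q" "a = s1 \<otimes> x [^] (k1::nat)" "s2 \<in> carrier R - Q" "b = s2 \<otimes> x [^] (k2::nat)" by blast
    have "a \<otimes> b = (s1 \<otimes> s2) \<otimes> x [^] (k1 + k2)"
      using sk xc by (simp add: nat_pow_mult[symmetric]) (simp add: m_ac)
    moreover have "s1 \<otimes> s2 \<in> carrier R - Q" using prime_mult_notin[OF Qp] sk by blast
    ultimately show "a \<otimes> b \<in> ?S" by blast
  qed
  then obtain P where P: "primeideal P R" "P \<inter> ?S = {}" by blast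
  have "P \<subseteq> Q"
  proof
    fix y assume "y \<in> P"
    moreover have "y \<in> carrier R" using calculation prime_sub[OF P(1)] by blast
    moreover { assume "y \<notin> Q"
      then have "y \<otimes> x [^] (0::nat) \<in> ?S" using calculation by blast
      then have "y \<in> ?S" using calculation by simp }
    ultimately show "y \<in> Q" using P(2) by blast
  qed
  then have "P = Q" using Q P(1) unfolding min_primes_def by blast
  moreover have "\<one> \<otimes> x [^] (1::nat) \<in> ?S" using prime_one_notin[OF Qp] by blast
  moreover have "\<one> \<otimes> x [^] (1::nat) = x" using xc by simp
  ultimately have "x \<in> P \<inter> ?S" using x by simp
  then show False using P(2) by blast
qed

lemma not_nil_min_prime:
  assumes x: "x \<in> carrier R" "\<not> nilpotent_el R x"
  shows "\<exists>Q\<in>min_primes R. x \<notin> Q"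
proof -
  let ?S = "{x [^] (k::nat) | k. True}"
  have "\<exists>Q\<in>min_primes R. Q \<inter> ?S = {}"
  proof (rule min_prime_disjoint)
    show "?S \<subseteq> carrier R" using x by auto
    show "\<one> \<in> ?S" by (metis (mono_tags, lifting) mem_Collect_eq nat_pow_0)
    show "\<zero> \<notin> ?S" using x unfolding nilpotent_el_def by auto
    fix a b assume "a \<in> ?S" "b \<in> ?S"
    then show "a \<otimes> b \<in> ?S" using x by (auto simp: nat_pow_mult)
  qed
  then obtain Q where "Q \<in> min_primes R" "Q \<inter> ?S = {}" by blast
  moreover have "x \<in> ?S" using x(1) by (intro CollectI exI[of _ "1::nat"]) simp
  ultimately show ?thesis by blast
qed

lemma nil_iff_min:
  assumes "x \<in> carrier R"
  shows "nilpotent_el R x \<longleftrightarrow> (\<forall>Q\<in>min_primes R. x \<in> Q)"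
  using assms not_nil_min_prime nil_in_prime min_primes_prime by blast

end



context cring begin

lemma finsum_one_elem: "h 0 \<in> carrier R \<Longrightarrow> finsum R h {..<Suc 0} = h (0::nat)"
proof -
  assume "h 0 \<in> carrier R"
  have "{..<Suc 0} = insert (0::nat) {}" by auto
  then show ?thesis using finsum_insert[of "{}" "0::nat" h] \<open>h 0 \<in> carrier R\<close> by simp
qed

lemma finsum_single: "h z \<in> carrier R \<Longrightarrow> finsum R h {z} = h z"
  using finsum_insert[of "{}" z h] by simp

lemma diff_ann: "a \<in> carrier R \<Longrightarrow> b \<in> carrier R \<Longrightarrow> f \<in> carrier R \<Longrightarrow> a \<otimes> f = b \<otimes> f \<Longrightarrow> (a \<ominus> b) \<otimes> f = \<zero>"
proof -
  assume c: "a \<in> carrier R" "b \<in> carrier R" "f \<in> carrier R" and eq: "a \<otimes> f = b \<otimes> f"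
  have "(a \<ominus> b) \<otimes> f = a \<otimes> f \<ominus> b \<otimes> f" using c by algebra
  then show ?thesis using eq c by simp
qed

lemma diff_mult: "a \<in> carrier R \<Longrightarrow> b \<in> carrier R \<Longrightarrow> e \<in> carrier R \<Longrightarrow> (a \<ominus> b) \<otimes> e = a \<otimes> e \<ominus> b \<otimes> e"
  by algebra

lemma PIdl_mem: "u \<in> PIdl f \<longleftrightarrow> (\<exists>y\<in>carrier R. u = y \<otimes> f)"
  unfolding cgenideal_def by blast

lemma proj_imp:
  assumes f: "f \<in> carrier R" and P: "projective_ideal R (PIdl f)"
  shows "\<exists>e\<in>carrier R. e \<otimes> f = f \<and> (\<forall>a\<in>carrier R. a \<otimes> f = \<zero> \<longrightarrow> a \<otimes> e = \<zero>)"
proof -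
  obtain Bs :: "'a set" and g :: "'a \<Rightarrow> 'a" and s :: "'a \<Rightarrow> 'a \<Rightarrow> 'a" where
    g: "\<forall>x\<in>Bs. g x \<in> PIdl f" and sF: "\<forall>u\<in>PIdl f. s u \<in> free_mod R Bs"
    and sM: "\<forall>a\<in>carrier R. \<forall>u\<in>PIdl f. \<forall>x\<in>Bs. s (a \<otimes> u) x = a \<otimes> s u x"
    and sS: "\<forall>u\<in>PIdl f. finsum R (\<lambda>x. s u x \<otimes> g x) {x \<in> Bs. s u x \<noteq> \<zero>} = u"
    using P unfolding projective_ideal_def by blast
  have fI: "f \<in> PIdl f" using cgenideal_self[OF f] .
  define c where "c = s f"
  define F where "F = {x \<in> Bs. c x \<noteq> \<zero>}"
  have cF: "c \<in> free_mod R Bs" using sF fI c_def by blast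
  have Ffin: "finite F" using cF unfolding F_def free_mod_def by blast
  have cc: "\<And>x. c x \<in> carrier R" using cF unfolding free_mod_def by auto
  define b where "b x = (SOME y. y \<in> carrier R \<and> g x = y \<otimes> f)" for x
  have b: "\<And>x. x \<in> Bs \<Longrightarrow> b x \<in> carrier R \<and> g x = b x \<otimes> f"
  proof -
    fix x assume "x \<in> Bs"
    then have "\<exists>y. y \<in> carrier R \<and> g x = y \<otimes> f" using g PIdl_mem by blast
    then show "b x \<in> carrier R \<and> g x = b x \<otimes> f" unfolding b_def by (rule someI_ex)
  qed
  have FB: "F \<subseteq> Bs" unfolding F_def by blast
  define e where "e = finsum R (\<lambda>x. c x \<otimes> b x) F"
  have ec: "e \<in> carrier R" unfolding e_def using b cc FB by (intro finsum_closed) auto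
  have "e \<otimes> f = finsum R (\<lambda>x. c x \<otimes> b x \<otimes> f) F"
    unfolding e_def using Ffin f b cc FB by (subst finsum_ldistr) auto
  also have "\<dots> = finsum R (\<lambda>x. c x \<otimes> g x) F"
    using b cc FB f by (intro finsum_cong') (auto simp: m_assoc)
  also have "\<dots> = f" using sS fI unfolding F_def c_def by blast
  finally have ef: "e \<otimes> f = f" .
  have s0: "\<And>x. x \<in> Bs \<Longrightarrow> s \<zero> x = \<zero>"
  proof -
    fix x assume "x \<in> Bs"
    then have "s (\<zero> \<otimes> f) x = \<zero> \<otimes> s f x" using sM fI by blast
    then show "s \<zero> x = \<zero>" using f cc c_def by simp
  qed
  have ann: "a \<otimes> e = \<zero>" if a: "a \<in> carrier R" "a \<otimes> f = \<zero>" for a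
  proof -
    have "a \<otimes> e = finsum R (\<lambda>x. a \<otimes> (c x \<otimes> b x)) F"
      unfolding e_def using Ffin a b cc FB by (subst finsum_rdistr) auto
    also have "\<dots> = finsum R (\<lambda>x. \<zero>) F"
    proof (intro finsum_cong')
      fix x assume x: "x \<in> F"
      have "s (a \<otimes> f) x = a \<otimes> c x" using sM fI a x FB unfolding c_def by blast
      then have "a \<otimes> c x = s \<zero> x" using a(2) by simp
      also have "\<dots> = \<zero>" using s0 a x FB by auto
      finally have "a \<otimes> c x = \<zero>" .
      then show "a \<otimes> (c x \<otimes> b x) = \<zero>" using a cc b x FB m_assoc[of a "c x" "b x"] by auto
    qed auto
    also have "\<dots> = \<zero>" by simp
    finally show ?thesis .
  qed
  show ?thesis using ec ef ann by blast
qed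

lemma imp_proj:
  assumes f: "f \<in> carrier R" and e: "e \<in> carrier R" "e \<otimes> f = f" "\<And>a. a \<in> carrier R \<Longrightarrow> a \<otimes> f = \<zero> \<Longrightarrow> a \<otimes> e = \<zero>"
  shows "projective_ideal R (PIdl f)"
proof -
  define y where "y u = (SOME y. y \<in> carrier R \<and> u = y \<otimes> f)" for u
  have y: "y u \<in> carrier R \<and> u = y u \<otimes> f" if "u \<in> PIdl f" for u
  proof -
    have "\<exists>z. z \<in> carrier R \<and> u = z \<otimes> f" using that PIdl_mem by blast
    then show ?thesis unfolding y_def by (rule someI_ex)
  qed
  have key: "y u \<otimes> e = z \<otimes> e" if z: "z \<in> carrier R" "u = z \<otimes> f" for u z
  proof -
    have uI: "u \<in> PIdl f" using z PIdl_mem by blast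
    have yc: "y u \<in> carrier R" using y[OF uI] by blast
    have "y u \<otimes> f = z \<otimes> f" using y[OF uI] z(2) by metis
    then have "(y u \<ominus> z) \<otimes> f = \<zero>" using diff_ann yc z f by blast
    then have "(y u \<ominus> z) \<otimes> e = \<zero>" using e(3) yc z by simp
    then have "y u \<otimes> e \<ominus> z \<otimes> e = \<zero>" using diff_mult yc z e by simp
    then show ?thesis using yc z e by (metis m_closed r_right_minus_eq)
  qed
  define s where "s u x = (if x = f then y u \<otimes> e else \<zero>)" for u x
  show ?thesis unfolding projective_ideal_def
  proof (intro exI[of _ "{f}"] exI[of _ "\<lambda>x. f"] exI[of _ s] conjI ballI)
    show "\<And>x. x \<in> {f} \<Longrightarrow> f \<in> PIdl f" using cgenideal_self[OF f] by blast
  next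
    fix u assume u: "u \<in> PIdl f"
    show "s u \<in> free_mod R {f}" unfolding free_mod_def s_def using y[OF u] e by auto
  next
    fix u v x assume u: "u \<in> PIdl f" and v: "v \<in> PIdl f" and x: "x \<in> {f}"
    have "u \<oplus> v = (y u \<oplus> y v) \<otimes> f" using y[OF u] y[OF v] f by (metis l_distr)
    then have "y (u \<oplus> v) \<otimes> e = (y u \<oplus> y v) \<otimes> e" using key y[OF u] y[OF v] by simp
    then show "s (u \<oplus> v) x = s u x \<oplus> s v x" unfolding s_def using x y[OF u] y[OF v] e by (simp add: l_distr)
  next
    fix a u x assume a: "a \<in> carrier R" and u: "u \<in> PIdl f" and x: "x \<in> {f}"
    have "a \<otimes> u = (a \<otimes> y u) \<otimes> f" using y[OF u] a f by (metis m_assoc)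
    then have "y (a \<otimes> u) \<otimes> e = (a \<otimes> y u) \<otimes> e" using key y[OF u] a by simp
    then show "s (a \<otimes> u) x = a \<otimes> s u x" unfolding s_def using x y[OF u] e a by (simp add: m_assoc)
  next
    fix u assume u: "u \<in> PIdl f"
    show "finsum R (\<lambda>x. s u x \<otimes> f) {x \<in> {f}. s u x \<noteq> \<zero>} = u"
    proof (cases "y u \<otimes> e = \<zero>")
      case True
      then have E: "{x \<in> {f}. s u x \<noteq> \<zero>} = {}" unfolding s_def by auto
      have "u = \<zero>"
      proof -
        have "u = y u \<otimes> (e \<otimes> f)" using y[OF u] e by simp
        also have "\<dots> = (y u \<otimes> e) \<otimes> f" using y[OF u] e f by (simp add: m_assoc)
        finally show ?thesis using True f by simp
      qed
      moreover have "finsum R (\<lambda>x. s u x \<otimes> f) {x \<in> {f}. s u x \<noteq> \<zero>} = \<zero>" unfolding E by simp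
      ultimately show ?thesis by simp
    next
      case False
      then have E: "{x \<in> {f}. s u x \<noteq> \<zero>} = {f}" unfolding s_def by auto
      have "finsum R (\<lambda>x. s u x \<otimes> f) {x \<in> {f}. s u x \<noteq> \<zero>} = s u f \<otimes> f"
        unfolding E by (rule finsum_single) (use y[OF u] e f in \<open>simp add: s_def\<close>)
      also have "s u f \<otimes> f = u" unfolding s_def using y[OF u] e f by (simp add: m_assoc)
      finally show ?thesis .
    qed
  qed
qed

lemma proj_iff:
  assumes f: "f \<in> carrier R"
  shows "projective_ideal R (PIdl f) \<longleftrightarrow> (\<exists>e\<in>carrier R. e \<otimes> f = f \<and> (\<forall>a\<in>carrier R. a \<otimes> f = \<zero> \<longrightarrow> a \<otimes> e = \<zero>))"
  using proj_imp[OF f] imp_proj[OF f] by blast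

lemma flat_imp:
  assumes f: "f \<in> carrier R" and F: "flat_ideal R (PIdl f)" and a: "a \<in> carrier R" "a \<otimes> f = \<zero>"
  shows "\<exists>e\<in>carrier R. e \<otimes> f = f \<and> a \<otimes> e = \<zero>"
proof -
  have fI: "f \<in> PIdl f" using cgenideal_self[OF f] .
  have pre: "(\<forall>i<Suc 0. (\<lambda>_. a) i \<in> carrier R \<and> (\<lambda>_. f) i \<in> PIdl f) \<and> finsum R (\<lambda>i. (\<lambda>_. a) i \<otimes> (\<lambda>_. f) i) {..<Suc 0} = \<zero>"
    using finsum_one_elem[of "\<lambda>i. a \<otimes> f"] a f fI by simp
  note inst = F[unfolded flat_ideal_def, rule_format, of "Suc 0" "\<lambda>_. a" "\<lambda>_. f", OF pre]
  from inst obtain m :: nat and A y where H: "(\<forall>j<m. y j \<in> PIdl f) \<and> (\<forall>i<Suc 0. \<forall>j<m. A i j \<in> carrier R)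
      \<and> (\<forall>i<Suc 0. f = finsum R (\<lambda>j. A i j \<otimes> y j) {..<m})
      \<and> (\<forall>j<m. finsum R (\<lambda>i. a \<otimes> A i j) {..<Suc 0} = \<zero>)"
    by blast
  have y: "\<forall>j<m. y j \<in> PIdl f" and A: "\<forall>i<Suc 0. \<forall>j<m. A i j \<in> carrier R"
    and fx: "\<forall>i<Suc 0. f = finsum R (\<lambda>j. A i j \<otimes> y j) {..<m}"
    and rel: "\<forall>j<m. finsum R (\<lambda>i. a \<otimes> A i j) {..<Suc 0} = \<zero>"
    using H by auto
  define t where "t j = (SOME z. z \<in> carrier R \<and> y j = z \<otimes> f)" for j
  have t: "t j \<in> carrier R \<and> y j = t j \<otimes> f" if "j < m" for j
  proof -
    have "\<exists>z. z \<in> carrier R \<and> y j = z \<otimes> f" using y that PIdl_mem by blast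
    then show ?thesis unfolding t_def by (rule someI_ex)
  qed
  have A0: "\<And>j. j < m \<Longrightarrow> A 0 j \<in> carrier R" using A by blast
  have aA: "\<And>j. j < m \<Longrightarrow> a \<otimes> A 0 j = \<zero>"
  proof -
    fix j assume j: "j < m"
    have "finsum R (\<lambda>i. a \<otimes> A i j) {..<Suc 0} = a \<otimes> A 0 j" using finsum_one_elem[of "\<lambda>i. a \<otimes> A i j"] A0[OF j] a by simp
    then show "a \<otimes> A 0 j = \<zero>" using rel j by simp
  qed
  define e where "e = finsum R (\<lambda>j. A 0 j \<otimes> t j) {..<m}"
  have ec: "e \<in> carrier R" unfolding e_def using A0 t by (intro finsum_closed) auto
  have "e \<otimes> f = finsum R (\<lambda>j. A 0 j \<otimes> t j \<otimes> f) {..<m}"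
    unfolding e_def using A0 t f by (subst finsum_ldistr) auto
  also have "\<dots> = finsum R (\<lambda>j. A 0 j \<otimes> y j) {..<m}"
    using A0 t f by (intro finsum_cong') (auto simp: m_assoc)
  also have "\<dots> = f" using fx by simp
  finally have ef: "e \<otimes> f = f" .
  have "a \<otimes> e = finsum R (\<lambda>j. a \<otimes> (A 0 j \<otimes> t j)) {..<m}"
    unfolding e_def using A0 t a by (subst finsum_rdistr) auto
  also have "\<dots> = finsum R (\<lambda>j. \<zero>) {..<m}"
    using A0 t a aA by (intro finsum_cong') (auto simp: m_assoc[symmetric])
  also have "\<dots> = \<zero>" by simp
  finally show ?thesis using ec ef by blast
qed

lemma imp_flat:
  assumes f: "f \<in> carrier R" and H: "\<And>a. a \<in> carrier R \<Longrightarrow> a \<otimes> f = \<zero> \<Longrightarrow> \<exists>e\<in>carrier R. e \<otimes> f = f \<and> a \<otimes> e = \<zero>"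
  shows "flat_ideal R (PIdl f)"
  unfolding flat_ideal_def
proof (intro allI impI)
  fix n :: nat and r x :: "nat \<Rightarrow> 'a"
  assume asm: "(\<forall>i<n. r i \<in> carrier R \<and> x i \<in> PIdl f) \<and> finsum R (\<lambda>i. r i \<otimes> x i) {..<n} = \<zero>"
  define c where "c i = (SOME z. z \<in> carrier R \<and> x i = z \<otimes> f)" for i
  have c: "c i \<in> carrier R \<and> x i = c i \<otimes> f" if "i < n" for i
  proof -
    have "\<exists>z. z \<in> carrier R \<and> x i = z \<otimes> f" using asm that PIdl_mem by blast
    then show ?thesis unfolding c_def by (rule someI_ex)
  qed
  have r: "\<And>i. i < n \<Longrightarrow> r i \<in> carrier R" using asm by blast
  define a where "a = finsum R (\<lambda>i. r i \<otimes> c i) {..<n}"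
  have ac: "a \<in> carrier R" unfolding a_def using r c by (intro finsum_closed) auto
  have "a \<otimes> f = finsum R (\<lambda>i. r i \<otimes> c i \<otimes> f) {..<n}"
    unfolding a_def using r c f by (subst finsum_ldistr) auto
  also have "\<dots> = finsum R (\<lambda>i. r i \<otimes> x i) {..<n}"
    using r c f by (intro finsum_cong') (auto simp: m_assoc)
  also have "\<dots> = \<zero>" using asm by blast
  finally obtain e where e: "e \<in> carrier R" "e \<otimes> f = f" "a \<otimes> e = \<zero>" using H[OF ac] by blast
  show "\<exists>(m::nat) A y. (\<forall>j<m. y j \<in> PIdl f) \<and> (\<forall>i<n. \<forall>j<m. A i j \<in> carrier R)
          \<and> (\<forall>i<n. x i = finsum R (\<lambda>j. A i j \<otimes> y j) {..<m})
          \<and> (\<forall>j<m. finsum R (\<lambda>i. r i \<otimes> A i j) {..<n} = \<zero>)"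
  proof (intro exI[of _ "Suc 0"] exI[of _ "\<lambda>i j. c i \<otimes> e"] exI[of _ "\<lambda>j. f"] conjI allI impI)
    show "\<And>j. j < Suc 0 \<Longrightarrow> f \<in> PIdl f" using cgenideal_self[OF f] .
    show "\<And>i j. i < n \<Longrightarrow> j < Suc 0 \<Longrightarrow> c i \<otimes> e \<in> carrier R" using c e by auto
  next
    fix i assume i: "i < n"
    have "finsum R (\<lambda>j. c i \<otimes> e \<otimes> f) {..<Suc 0} = c i \<otimes> e \<otimes> f"
      using finsum_one_elem[of "\<lambda>j. c i \<otimes> e \<otimes> f"] c[OF i] e f by simp
    also have "\<dots> = c i \<otimes> f" using c[OF i] e f by (simp add: m_assoc)
    finally show "x i = finsum R (\<lambda>j. c i \<otimes> e \<otimes> f) {..<Suc 0}" using c[OF i] by simp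
  next
    fix j assume "j < Suc 0"
    have "finsum R (\<lambda>i. r i \<otimes> (c i \<otimes> e)) {..<n} = finsum R (\<lambda>i. r i \<otimes> c i \<otimes> e) {..<n}"
      using r c e by (intro finsum_cong') (auto simp: m_assoc)
    also have "\<dots> = a \<otimes> e" unfolding a_def using r c e by (subst finsum_ldistr) auto
    finally show "finsum R (\<lambda>i. r i \<otimes> (c i \<otimes> e)) {..<n} = \<zero>" using e by simp
  qed
qed

lemma flat_iff:
  assumes f: "f \<in> carrier R"
  shows "flat_ideal R (PIdl f) \<longleftrightarrow> (\<forall>a\<in>carrier R. a \<otimes> f = \<zero> \<longrightarrow> (\<exists>e\<in>carrier R. e \<otimes> f = f \<and> a \<otimes> e = \<zero>))"
  using flat_imp[OF f] imp_flat[OF f] by blast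

end



context cring begin

lemma loc_rel_mem: "((a, s), (b, t)) \<in> loc_rel R P \<longleftrightarrow> a \<in> carrier R \<and> b \<in> carrier R
      \<and> s \<in> carrier R - P \<and> t \<in> carrier R - P
      \<and> (\<exists>u\<in>carrier R - P. u \<otimes> (a \<otimes> t \<ominus> b \<otimes> s) = \<zero>)"
  unfolding loc_rel_def by simp

lemma loc_equiv:
  assumes P: "primeideal P R"
  shows "equiv (carrier R \<times> (carrier R - P)) (loc_rel R P)"
proof (rule equivI)
  show "loc_rel R P \<subseteq> (carrier R \<times> (carrier R - P)) \<times> (carrier R \<times> (carrier R - P))"
    unfolding loc_rel_def by auto
  show "refl_on (carrier R \<times> (carrier R - P)) (loc_rel R P)"
  proof (rule refl_onI)
    fix x assume "x \<in> carrier R \<times> (carrier R - P)"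
    then obtain a s where x: "x = (a, s)" "a \<in> carrier R" "s \<in> carrier R - P" by blast
    have "\<one> \<otimes> (a \<otimes> s \<ominus> a \<otimes> s) = \<zero>" using x by simp
    moreover have "\<one> \<in> carrier R - P" using prime_one_notin[OF P] by simp
    ultimately show "(x, x) \<in> loc_rel R P" using x loc_rel_mem by blast
  qed
  show "sym (loc_rel R P)"
  proof (rule symI)
    fix x y assume xy: "(x, y) \<in> loc_rel R P"
    obtain a s b t where xy': "x = (a, s)" "y = (b, t)" by (cases x, cases y) auto
    obtain u where u: "u \<in> carrier R - P" "u \<otimes> (a \<otimes> t \<ominus> b \<otimes> s) = \<zero>"
      and c: "a \<in> carrier R" "b \<in> carrier R" "s \<in> carrier R - P" "t \<in> carrier R - P"
      using xy xy' loc_rel_mem by blast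
    have cu: "u \<in> carrier R" "s \<in> carrier R" "t \<in> carrier R" using u c by auto
    have "u \<otimes> (b \<otimes> s \<ominus> a \<otimes> t) = \<ominus> (u \<otimes> (a \<otimes> t \<ominus> b \<otimes> s))" using cu c(1,2) by algebra
    then have "u \<otimes> (b \<otimes> s \<ominus> a \<otimes> t) = \<zero>" by (simp only: u(2)) simp
    then show "(y, x) \<in> loc_rel R P" using xy' u c loc_rel_mem by blast
  qed
  show "trans (loc_rel R P)"
  proof (rule transI)
    fix x y z assume xy: "(x, y) \<in> loc_rel R P" and yz: "(y, z) \<in> loc_rel R P"
    obtain a s b t c r where xyz: "x = (a, s)" "y = (b, t)" "z = (c, r)" by (cases x, cases y, cases z) auto
    obtain u where u: "u \<in> carrier R - P" "u \<otimes> (a \<otimes> t \<ominus> b \<otimes> s) = \<zero>"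
      and cc: "a \<in> carrier R" "b \<in> carrier R" "s \<in> carrier R - P" "t \<in> carrier R - P"
      using xy xyz loc_rel_mem by blast
    obtain v where v: "v \<in> carrier R - P" "v \<otimes> (b \<otimes> r \<ominus> c \<otimes> t) = \<zero>"
      and cc2: "c \<in> carrier R" "r \<in> carrier R - P"
      using yz xyz loc_rel_mem by blast
    have cr: "u \<in> carrier R" "v \<in> carrier R" "s \<in> carrier R" "t \<in> carrier R" "r \<in> carrier R" using u(1) v(1) cc cc2 by auto
    have "(u \<otimes> v \<otimes> t) \<otimes> (a \<otimes> r \<ominus> c \<otimes> s) = (v \<otimes> r) \<otimes> (u \<otimes> (a \<otimes> t \<ominus> b \<otimes> s)) \<oplus> (u \<otimes> s) \<otimes> (v \<otimes> (b \<otimes> r \<ominus> c \<otimes> t))"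
      using cr cc(1,2) cc2(1) by algebra
    also have "\<dots> = \<zero>" using u v cc cc2 by (simp only: u(2) v(2)) (simp add: cr)
    finally have "(u \<otimes> v \<otimes> t) \<otimes> (a \<otimes> r \<ominus> c \<otimes> s) = \<zero>" .
    moreover have "u \<otimes> v \<otimes> t \<in> carrier R - P" using prime_mult_notin[OF P] u v cc by blast
    ultimately show "(x, z) \<in> loc_rel R P" using xyz cc cc2 loc_rel_mem by blast
  qed
qed

lemma loc_class_eq:
  assumes P: "primeideal P R" and c: "a \<in> carrier R" "s \<in> carrier R - P" "b \<in> carrier R" "t \<in> carrier R - P"
  shows "loc_class R P a s = loc_class R P b t \<longleftrightarrow> (\<exists>u\<in>carrier R - P. u \<otimes> (a \<otimes> t \<ominus> b \<otimes> s) = \<zero>)"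
  unfolding loc_class_def using eq_equiv_class_iff[OF loc_equiv[OF P], of "(a, s)" "(b, t)"] c loc_rel_mem by auto

lemma loc_class_zero:
  assumes P: "primeideal P R" and c: "a \<in> carrier R" "s \<in> carrier R - P"
  shows "loc_class R P a s = loc_class R P \<zero> \<one> \<longleftrightarrow> (\<exists>u\<in>carrier R - P. u \<otimes> a = \<zero>)"
proof -
  have o: "\<one> \<in> carrier R - P" using prime_one_notin[OF P] by simp
  have sc: "s \<in> carrier R" using c by blast
  have "\<And>u. u \<in> carrier R \<Longrightarrow> u \<otimes> (a \<otimes> \<one> \<ominus> \<zero> \<otimes> s) = u \<otimes> a" using c(1) sc by algebra
  then show ?thesis using loc_class_eq[OF P c zero_closed o] by auto
qed

lemma loc_mult_wd:
  assumes P: "primeideal P R"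
    and r1: "((a, s), (a', s')) \<in> loc_rel R P" and r2: "((b, t), (b', t')) \<in> loc_rel R P"
  shows "((a \<otimes> b, s \<otimes> t), (a' \<otimes> b', s' \<otimes> t')) \<in> loc_rel R P"
proof -
  obtain u where u: "u \<in> carrier R - P" "u \<otimes> (a \<otimes> s' \<ominus> a' \<otimes> s) = \<zero>"
    and c1: "a \<in> carrier R" "a' \<in> carrier R" "s \<in> carrier R - P" "s' \<in> carrier R - P"
    using r1 loc_rel_mem by blast
  obtain v where v: "v \<in> carrier R - P" "v \<otimes> (b \<otimes> t' \<ominus> b' \<otimes> t) = \<zero>"
    and c2: "b \<in> carrier R" "b' \<in> carrier R" "t \<in> carrier R - P" "t' \<in> carrier R - P"
    using r2 loc_rel_mem by blast
  have cr: "u \<in> carrier R" "v \<in> carrier R" "s \<in> carrier R" "t \<in> carrier R" "s' \<in> carrier R" "t' \<in> carrier R" using u(1) v(1) c1 c2 by auto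
  have "(u \<otimes> v) \<otimes> ((a \<otimes> b) \<otimes> (s' \<otimes> t') \<ominus> (a' \<otimes> b') \<otimes> (s \<otimes> t))
      = (v \<otimes> b \<otimes> t') \<otimes> (u \<otimes> (a \<otimes> s' \<ominus> a' \<otimes> s)) \<oplus> (u \<otimes> a' \<otimes> s) \<otimes> (v \<otimes> (b \<otimes> t' \<ominus> b' \<otimes> t))"
    using cr c1(1,2) c2(1,2) by algebra
  also have "\<dots> = \<zero>" using u v c1 c2 by (simp only: u(2) v(2)) (simp add: cr)
  finally have eq: "(u \<otimes> v) \<otimes> ((a \<otimes> b) \<otimes> (s' \<otimes> t') \<ominus> (a' \<otimes> b') \<otimes> (s \<otimes> t)) = \<zero>" .
  have "u \<otimes> v \<in> carrier R - P" "s \<otimes> t \<in> carrier R - P" "s' \<otimes> t' \<in> carrier R - P"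
    using prime_mult_notin[OF P] u v c1 c2 by blast+
  then show ?thesis using eq c1 c2 loc_rel_mem by blast
qed

lemma loc_mult_class:
  assumes P: "primeideal P R" and c: "a \<in> carrier R" "s \<in> carrier R - P" "b \<in> carrier R" "t \<in> carrier R - P"
  shows "loc_mult R P (loc_class R P a s) (loc_class R P b t) = loc_class R P (a \<otimes> b) (s \<otimes> t)"
proof -
  have E: "equiv (carrier R \<times> (carrier R - P)) (loc_rel R P)" using loc_equiv[OF P] .
  have st: "s \<otimes> t \<in> carrier R - P" using prime_mult_notin[OF P] c by blast
  have sub: "loc_class R P (a' \<otimes> b') (s' \<otimes> t') = loc_class R P (a \<otimes> b) (s \<otimes> t)"
    if m: "(a', s') \<in> loc_class R P a s" "(b', t') \<in> loc_class R P b t" for a' s' b' t'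
  proof -
    have "((a, s), (a', s')) \<in> loc_rel R P" "((b, t), (b', t')) \<in> loc_rel R P"
      using m unfolding loc_class_def by auto
    then have "((a \<otimes> b, s \<otimes> t), (a' \<otimes> b', s' \<otimes> t')) \<in> loc_rel R P" using loc_mult_wd[OF P] by blast
    then show ?thesis unfolding loc_class_def using E equiv_class_eq by metis
  qed
  have self: "(a, s) \<in> loc_class R P a s" "(b, t) \<in> loc_class R P b t"
    unfolding loc_class_def using equiv_class_self[OF E] c by auto
  show ?thesis unfolding loc_mult_def
  proof
    show "\<Union>{loc_class R P (a' \<otimes> b') (s' \<otimes> t') |a' s' b' t'. (a', s') \<in> loc_class R P a s \<and> (b', t') \<in> loc_class R P b t}
        \<subseteq> loc_class R P (a \<otimes> b) (s \<otimes> t)"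
      using sub by blast
    show "loc_class R P (a \<otimes> b) (s \<otimes> t) \<subseteq> \<Union>{loc_class R P (a' \<otimes> b') (s' \<otimes> t') |a' s' b' t'. (a', s') \<in> loc_class R P a s \<and> (b', t') \<in> loc_class R P b t}"
      using self by blast
  qed
qed

lemma loc_carrier_E:
  assumes "X \<in> carrier (localization R P)"
  obtains a s where "a \<in> carrier R" "s \<in> carrier R - P" "X = loc_class R P a s"
  using assms unfolding localization_def loc_class_def by (auto elim!: quotientE)

lemma loc_carrier_I:
  assumes "a \<in> carrier R" "s \<in> carrier R - P"
  shows "loc_class R P a s \<in> carrier (localization R P)"
  using assms unfolding localization_def loc_class_def by (auto intro!: quotientI)

lemma loc_pow:
  assumes P: "primeideal P R" and c: "a \<in> carrier R" "s \<in> carrier R - P"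
  shows "loc_class R P a s [^]\<^bsub>localization R P\<^esub> (n::nat) = loc_class R P (a [^] n) (s [^] n)"
proof (induction n)
  case 0
  then show ?case by (simp add: nat_pow_def localization_def)
next
  case (Suc n)
  have "loc_class R P a s [^]\<^bsub>localization R P\<^esub> Suc n = loc_mult R P (loc_class R P a s [^]\<^bsub>localization R P\<^esub> n) (loc_class R P a s)"
    by (simp add: nat_pow_def localization_def)
  also have "\<dots> = loc_mult R P (loc_class R P (a [^] n) (s [^] n)) (loc_class R P a s)" using Suc by simp
  also have "\<dots> = loc_class R P (a [^] n \<otimes> a) (s [^] n \<otimes> s)"
    using loc_mult_class[OF P] c prime_pow_notin[OF P] by simp
  finally show ?case by simp
qed

lemma primary_loc_iff:
  assumes P: "primeideal P R"
  shows "primary_ring (localization R P) \<longleftrightarrow>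
    (\<forall>a\<in>carrier R. \<forall>b\<in>carrier R. a \<otimes> b = \<zero> \<longrightarrow>
       (\<exists>u\<in>carrier R - P. u \<otimes> a = \<zero>) \<or> (\<exists>u\<in>carrier R - P. \<exists>k::nat. u \<otimes> b [^] k = \<zero>))"
    (is "?L \<longleftrightarrow> ?R")
proof
  have o: "\<one> \<in> carrier R - P" using prime_one_notin[OF P] by simp
  have z: "\<zero>\<^bsub>localization R P\<^esub> = loc_class R P \<zero> \<one>" by (simp add: localization_def)
  have m: "\<And>X Y. X \<otimes>\<^bsub>localization R P\<^esub> Y = loc_mult R P X Y" by (simp add: localization_def)
  show "?L \<Longrightarrow> ?R"
  proof (intro ballI impI)
    fix a b assume L: ?L and ab: "a \<in> carrier R" "b \<in> carrier R" "a \<otimes> b = \<zero>"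
    have A: "loc_class R P a \<one> \<in> carrier (localization R P)" "loc_class R P b \<one> \<in> carrier (localization R P)"
      using loc_carrier_I ab o by auto
    have "loc_class R P a \<one> \<otimes>\<^bsub>localization R P\<^esub> loc_class R P b \<one> = loc_class R P (a \<otimes> b) (\<one> \<otimes> \<one>)"
      using loc_mult_class[OF P ab(1) o ab(2) o] m by simp
    also have "\<dots> = \<zero>\<^bsub>localization R P\<^esub>" using ab z by simp
    finally have "loc_class R P a \<one> = \<zero>\<^bsub>localization R P\<^esub> \<or> nilpotent_el (localization R P) (loc_class R P b \<one>)"
      using L A unfolding primary_ring_def by blast
    then show "(\<exists>u\<in>carrier R - P. u \<otimes> a = \<zero>) \<or> (\<exists>u\<in>carrier R - P. \<exists>k::nat. u \<otimes> b [^] k = \<zero>)"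
    proof
      assume "loc_class R P a \<one> = \<zero>\<^bsub>localization R P\<^esub>"
      then show ?thesis using loc_class_zero[OF P ab(1) o] z by simp
    next
      assume "nilpotent_el (localization R P) (loc_class R P b \<one>)"
      then obtain k :: nat where "loc_class R P b \<one> [^]\<^bsub>localization R P\<^esub> k = \<zero>\<^bsub>localization R P\<^esub>"
        unfolding nilpotent_el_def by blast
      then have "loc_class R P (b [^] k) (\<one> [^] k) = loc_class R P \<zero> \<one>" using loc_pow[OF P ab(2) o] z by simp
      then have "\<exists>u\<in>carrier R - P. u \<otimes> b [^] k = \<zero>" using loc_class_zero[OF P _ o] ab by simp
      then show ?thesis by blast
    qed
  qed
next
  assume H: ?R
  have o: "\<one> \<in> carrier R - P" using prime_one_notin[OF P] by simp
  have z: "\<zero>\<^bsub>localization R P\<^esub> = loc_class R P \<zero> \<one>" by (simp add: localization_def)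
  have one: "\<one>\<^bsub>localization R P\<^esub> = loc_class R P \<one> \<one>" by (simp add: localization_def)
  have m: "\<And>X Y. X \<otimes>\<^bsub>localization R P\<^esub> Y = loc_mult R P X Y" by (simp add: localization_def)
  show ?L unfolding primary_ring_def
  proof (intro conjI ballI impI)
    show "\<one>\<^bsub>localization R P\<^esub> \<noteq> \<zero>\<^bsub>localization R P\<^esub>"
    proof
      assume "\<one>\<^bsub>localization R P\<^esub> = \<zero>\<^bsub>localization R P\<^esub>"
      then obtain u where "u \<in> carrier R - P" "u \<otimes> \<one> = \<zero>" using loc_class_zero[OF P one_closed o] z one by auto
      then show False using prime_zero[OF P] by auto
    qed
  next
    fix A B assume AB: "A \<in> carrier (localization R P)" "B \<in> carrier (localization R P)"
      "A \<otimes>\<^bsub>localization R P\<^esub> B = \<zero>\<^bsub>localization R P\<^esub>"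
    obtain a s where as: "a \<in> carrier R" "s \<in> carrier R - P" "A = loc_class R P a s" using AB(1) by (rule loc_carrier_E)
    obtain b t where bt: "b \<in> carrier R" "t \<in> carrier R - P" "B = loc_class R P b t" using AB(2) by (rule loc_carrier_E)
    have st: "s \<otimes> t \<in> carrier R - P" using prime_mult_notin[OF P] as bt by blast
    have "loc_class R P (a \<otimes> b) (s \<otimes> t) = loc_class R P \<zero> \<one>"
      using AB(3) loc_mult_class[OF P as(1,2) bt(1,2)] as bt m z by simp
    then obtain u where u: "u \<in> carrier R - P" "u \<otimes> (a \<otimes> b) = \<zero>"
      using loc_class_zero[OF P _ st] as bt by auto
    have "(u \<otimes> a) \<otimes> b = \<zero>" using u as bt by (simp add: m_assoc)
    then have "(\<exists>v\<in>carrier R - P. v \<otimes> (u \<otimes> a) = \<zero>) \<or> (\<exists>v\<in>carrier R - P. \<exists>k::nat. v \<otimes> b [^] k = \<zero>)"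
      using H u as bt by auto
    then show "A = \<zero>\<^bsub>localization R P\<^esub> \<or> nilpotent_el (localization R P) B"
    proof
      assume "\<exists>v\<in>carrier R - P. v \<otimes> (u \<otimes> a) = \<zero>"
      then obtain v where v: "v \<in> carrier R - P" "v \<otimes> (u \<otimes> a) = \<zero>" by blast
      have "(v \<otimes> u) \<otimes> a = \<zero>" using v u as by (simp add: m_assoc)
      moreover have "v \<otimes> u \<in> carrier R - P" using prime_mult_notin[OF P] u v by blast
      ultimately have "A = loc_class R P \<zero> \<one>" using loc_class_zero[OF P as(1,2)] as by blast
      then show ?thesis using z by simp
    next
      assume "\<exists>v\<in>carrier R - P. \<exists>k::nat. v \<otimes> b [^] k = \<zero>"
      then obtain v k where v: "v \<in> carrier R - P" "v \<otimes> b [^] (k::nat) = \<zero>" by blast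
      have "B [^]\<^bsub>localization R P\<^esub> k = loc_class R P (b [^] k) (t [^] k)" using loc_pow[OF P bt(1,2)] bt by simp
      also have "\<dots> = loc_class R P \<zero> \<one>" using loc_class_zero[OF P _ prime_pow_notin[OF P bt(2)]] bt v by auto
      finally have "B [^]\<^bsub>localization R P\<^esub> k = \<zero>\<^bsub>localization R P\<^esub>" using z by simp
      then show ?thesis unfolding nilpotent_el_def using AB(2) by blast
    qed
  qed
qed

end



context cring begin

lemma nilrad_ideal: "ideal (nilradical R) R"
proof (cases "min_primes R = {}")
  case True
  then have "nilradical R = carrier R" unfolding nilradical_def using nil_iff_min by auto
  then show ?thesis using oneideal by simp
next
  case False
  have "nilradical R = \<Inter>(min_primes R)"
  proof
    show "nilradical R \<subseteq> \<Inter> (min_primes R)" unfolding nilradical_def using nil_iff_min by auto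
    show "\<Inter> (min_primes R) \<subseteq> nilradical R"
    proof
      fix x assume x: "x \<in> \<Inter> (min_primes R)"
      obtain Q where "Q \<in> min_primes R" using False by blast
      then have "x \<in> carrier R" using x prime_sub min_primes_prime by blast
      then show "x \<in> nilradical R" unfolding nilradical_def using nil_iff_min x by auto
    qed
  qed
  moreover have "ideal (\<Inter> (min_primes R)) R"
    by (rule i_Intersect) (use False min_primes_prime primeideal.axioms(1) in auto)
  ultimately show ?thesis by simp
qed

lemma nilrad_mem: "x \<in> nilradical R \<longleftrightarrow> nilpotent_el R x"
  unfolding nilradical_def nilpotent_el_def by auto

lemma quot_eq:
  assumes I: "ideal I R" and c: "x \<in> carrier R" "y \<in> carrier R"
  shows "I +> x = I +> y \<longleftrightarrow> x \<ominus> y \<in> I"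
proof -
  interpret I: ideal I R by fact
  show ?thesis
  proof
    assume "I +> x = I +> y"
    then have "x \<in> I +> y" using I.a_rcos_self[OF c(1)] by simp
    then show "x \<ominus> y \<in> I" using I.a_rcos_module_minus[OF ring_axioms c(2) c(1)] by simp
  next
    assume "x \<ominus> y \<in> I"
    then have "x \<in> I +> y" using I.a_rcos_module_minus[OF ring_axioms c(2) c(1)] by simp
    then show "I +> x = I +> y" using I.a_repr_independence'[OF _ c(2)] by simp
  qed
qed

lemma quot_zero_iff:
  assumes I: "ideal I R" and c: "x \<in> carrier R"
  shows "I +> x = \<zero>\<^bsub>R Quot I\<^esub> \<longleftrightarrow> x \<in> I"
proof -
  interpret I: ideal I R by fact
  have "\<zero>\<^bsub>R Quot I\<^esub> = I" by (simp add: FactRing_def)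
  then show ?thesis using I.rcos_const_imp_mem[OF c] a_rcos_zero[OF I] by auto
qed

lemma quot_mult:
  assumes I: "ideal I R" and c: "x \<in> carrier R" "y \<in> carrier R"
  shows "(I +> x) \<otimes>\<^bsub>R Quot I\<^esub> (I +> y) = I +> (x \<otimes> y)"
  using ring_hom_mult[OF ideal.rcos_ring_hom[OF I] c] by simp

lemma quot_carrier:
  assumes I: "ideal I R"
  shows "X \<in> carrier (R Quot I) \<longleftrightarrow> (\<exists>x\<in>carrier R. X = I +> x)"
  unfolding FactRing_def A_RCOSETS_def' by auto

definition PPN :: bool where
  "PPN \<longleftrightarrow> (\<forall>f\<in>carrier R. \<exists>e\<in>carrier R. nilpotent_el R (e \<otimes> f \<ominus> f)
      \<and> (\<forall>a\<in>carrier R. nilpotent_el R (a \<otimes> f) \<longrightarrow> nilpotent_el R (a \<otimes> e)))"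

lemma pp_quot_iff: "pp_ring (R Quot nilradical R) \<longleftrightarrow> PPN"
proof -
  let ?N = "nilradical R"
  let ?Q = "R Quot ?N"
  have N: "ideal ?N R" by (rule nilrad_ideal)
  have Qc: "cring ?Q" using ideal.quotient_is_cring[OF N is_cring] .
  have "pp_ring ?Q \<longleftrightarrow> (\<forall>F\<in>carrier ?Q. \<exists>E\<in>carrier ?Q. E \<otimes>\<^bsub>?Q\<^esub> F = F \<and>
      (\<forall>A\<in>carrier ?Q. A \<otimes>\<^bsub>?Q\<^esub> F = \<zero>\<^bsub>?Q\<^esub> \<longrightarrow> A \<otimes>\<^bsub>?Q\<^esub> E = \<zero>\<^bsub>?Q\<^esub>))"
    unfolding pp_ring_def using cring.proj_iff[OF Qc] by simp
  also have "\<dots> \<longleftrightarrow> PPN"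
  proof
    assume H: "\<forall>F\<in>carrier ?Q. \<exists>E\<in>carrier ?Q. E \<otimes>\<^bsub>?Q\<^esub> F = F \<and>
      (\<forall>A\<in>carrier ?Q. A \<otimes>\<^bsub>?Q\<^esub> F = \<zero>\<^bsub>?Q\<^esub> \<longrightarrow> A \<otimes>\<^bsub>?Q\<^esub> E = \<zero>\<^bsub>?Q\<^esub>)"
    show PPN unfolding PPN_def
    proof
      fix f assume f: "f \<in> carrier R"
      have "?N +> f \<in> carrier ?Q" using quot_carrier[OF N] f by blast
      then obtain E where E: "E \<in> carrier ?Q" "E \<otimes>\<^bsub>?Q\<^esub> (?N +> f) = ?N +> f"
        "\<forall>A\<in>carrier ?Q. A \<otimes>\<^bsub>?Q\<^esub> (?N +> f) = \<zero>\<^bsub>?Q\<^esub> \<longrightarrow> A \<otimes>\<^bsub>?Q\<^esub> E = \<zero>\<^bsub>?Q\<^esub>"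
        using H by blast
      obtain e where e: "e \<in> carrier R" "E = ?N +> e" using E(1) quot_carrier[OF N] by blast
      have "?N +> (e \<otimes> f) = ?N +> f" using E(2) e quot_mult[OF N e(1) f] by simp
      then have 1: "nilpotent_el R (e \<otimes> f \<ominus> f)" using quot_eq[OF N _ f] e f nilrad_mem by simp
      have 2: "nilpotent_el R (a \<otimes> e)" if a: "a \<in> carrier R" "nilpotent_el R (a \<otimes> f)" for a
      proof -
        have "?N +> a \<in> carrier ?Q" using quot_carrier[OF N] a by blast
        moreover have "(?N +> a) \<otimes>\<^bsub>?Q\<^esub> (?N +> f) = \<zero>\<^bsub>?Q\<^esub>"
          using quot_mult[OF N a(1) f] quot_zero_iff[OF N] a f nilrad_mem by simp
        ultimately have "(?N +> a) \<otimes>\<^bsub>?Q\<^esub> E = \<zero>\<^bsub>?Q\<^esub>" using E(3) by blast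
        then show ?thesis using quot_mult[OF N a(1) e(1)] e quot_zero_iff[OF N] a nilrad_mem by simp
      qed
      show "\<exists>e\<in>carrier R. nilpotent_el R (e \<otimes> f \<ominus> f) \<and> (\<forall>a\<in>carrier R. nilpotent_el R (a \<otimes> f) \<longrightarrow> nilpotent_el R (a \<otimes> e))"
        using e(1) 1 2 by blast
    qed
  next
    assume H: PPN
    show "\<forall>F\<in>carrier ?Q. \<exists>E\<in>carrier ?Q. E \<otimes>\<^bsub>?Q\<^esub> F = F \<and>
      (\<forall>A\<in>carrier ?Q. A \<otimes>\<^bsub>?Q\<^esub> F = \<zero>\<^bsub>?Q\<^esub> \<longrightarrow> A \<otimes>\<^bsub>?Q\<^esub> E = \<zero>\<^bsub>?Q\<^esub>)"
    proof
      fix F assume "F \<in> carrier ?Q"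
      then obtain f where f: "f \<in> carrier R" "F = ?N +> f" using quot_carrier[OF N] by blast
      obtain e where e: "e \<in> carrier R" "nilpotent_el R (e \<otimes> f \<ominus> f)"
        "\<And>a. a \<in> carrier R \<Longrightarrow> nilpotent_el R (a \<otimes> f) \<Longrightarrow> nilpotent_el R (a \<otimes> e)"
        using H f unfolding PPN_def by blast
      have Ec: "?N +> e \<in> carrier ?Q" using quot_carrier[OF N] e by blast
      have 1: "(?N +> e) \<otimes>\<^bsub>?Q\<^esub> F = F"
        using quot_mult[OF N e(1) f(1)] f quot_eq[OF N _ f(1)] e nilrad_mem by simp
      have 2: "A \<otimes>\<^bsub>?Q\<^esub> (?N +> e) = \<zero>\<^bsub>?Q\<^esub>" if A: "A \<in> carrier ?Q" "A \<otimes>\<^bsub>?Q\<^esub> F = \<zero>\<^bsub>?Q\<^esub>" for A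
      proof -
        obtain a where a: "a \<in> carrier R" "A = ?N +> a" using A(1) quot_carrier[OF N] by blast
        have "nilpotent_el R (a \<otimes> f)" using A(2) a f quot_mult[OF N a(1) f(1)] quot_zero_iff[OF N] nilrad_mem by simp
        then have "nilpotent_el R (a \<otimes> e)" using e(3) a by blast
        then show ?thesis using a quot_mult[OF N a(1) e(1)] quot_zero_iff[OF N] e nilrad_mem by simp
      qed
      show "\<exists>E\<in>carrier ?Q. E \<otimes>\<^bsub>?Q\<^esub> F = F \<and> (\<forall>A\<in>carrier ?Q. A \<otimes>\<^bsub>?Q\<^esub> F = \<zero>\<^bsub>?Q\<^esub> \<longrightarrow> A \<otimes>\<^bsub>?Q\<^esub> E = \<zero>\<^bsub>?Q\<^esub>)"
        using Ec 1 2 by blast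
    qed
  qed
  finally show ?thesis .
qed

end



context cring begin

lemma pow_zero_mono: assumes "x \<in> carrier R" "x [^] (j::nat) = \<zero>" "j \<le> (J::nat)" shows "x [^] J = \<zero>"
proof -
  have "x [^] J = x [^] (j + (J - j))" using assms(3) by simp
  also have "\<dots> = x [^] j \<otimes> x [^] (J - j)" using assms(1) by (simp add: nat_pow_mult)
  finally show ?thesis using assms by simp
qed

lemma pow_split: assumes "x \<in> carrier R" "(m::nat) \<le> k" shows "x [^] k = x [^] m \<otimes> x [^] (k - m)"
proof -
  have "x [^] k = x [^] (m + (k - m))" using assms(2) by simp
  also have "\<dots> = x [^] m \<otimes> x [^] (k - m)" using assms(1) by (simp add: nat_pow_mult)
  finally show ?thesis .
qed

lemma m_rot: "x \<in> carrier R \<Longrightarrow> y \<in> carrier R \<Longrightarrow> z \<in> carrier R \<Longrightarrow> x \<otimes> (y \<otimes> z) = (y \<otimes> x) \<otimes> z"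
  by algebra

lemma pow_idem: assumes "e \<in> carrier R" "e \<otimes> e = e" shows "e [^] (Suc l) = e"
proof (induction l)
  case 0 then show ?case using assms by simp
next
  case (Suc l)
  have "e [^] Suc (Suc l) = e [^] (Suc l) \<otimes> e" by simp
  then show ?case using Suc assms by simp
qed

lemma GPP_iff: "GPP_ring R \<longleftrightarrow> (\<forall>f\<in>carrier R. \<exists>n::nat. n \<ge> 1 \<and> (\<exists>e\<in>carrier R. e \<otimes> f [^] n = f [^] n
     \<and> (\<forall>a\<in>carrier R. a \<otimes> f [^] n = \<zero> \<longrightarrow> a \<otimes> e = \<zero>)))"
  unfolding GPP_ring_def using proj_iff by simp

lemma GPF_iff: "GPF_ring R \<longleftrightarrow> (\<forall>f\<in>carrier R. \<exists>n::nat. n \<ge> 1 \<and> (\<forall>a\<in>carrier R. a \<otimes> f [^] n = \<zero> \<longrightarrow>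
     (\<exists>e\<in>carrier R. e \<otimes> f [^] n = f [^] n \<and> a \<otimes> e = \<zero>)))"
  unfolding GPF_ring_def using flat_iff by simp

lemma QPF_iff: "quasi_pf_ring R \<longleftrightarrow> (\<forall>f\<in>carrier R. \<forall>a\<in>carrier R. a \<otimes> f = \<zero> \<longrightarrow>
     (\<exists>g\<in>carrier R. g \<otimes> f = \<zero> \<and> nilpotent_el R (a \<otimes> (\<one> \<ominus> g))))"
  unfolding quasi_pf_ring_def quasi_pure_def annihilator_def by auto

lemma GPP_GPF: "GPP_ring R \<Longrightarrow> GPF_ring R"
  unfolding GPP_iff GPF_iff by blast

lemma GPP_support:
  assumes f: "f \<in> carrier R" and n: "(n::nat) \<ge> 1" and e: "e \<in> carrier R" "e \<otimes> f [^] n = f [^] n"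
    and ann: "\<And>a. a \<in> carrier R \<Longrightarrow> a \<otimes> f [^] n = \<zero> \<Longrightarrow> a \<otimes> e = \<zero>"
  shows "\<exists>d\<in>carrier R. \<forall>Q\<in>min_primes R. (f \<in> Q \<longrightarrow> d \<notin> Q) \<and> (f \<notin> Q \<longrightarrow> d \<in> Q)"
proof -
  define e' where "e' = e \<otimes> e"
  have e'c: "e' \<in> carrier R" unfolding e'_def using e by simp
  have fnc: "f [^] n \<in> carrier R" using f by simp
  have e'f: "e' \<otimes> f [^] n = f [^] n" unfolding e'_def using e(1) fnc e(2) m_assoc[of e e "f [^] n"] by simp
  have ann': "a \<otimes> e' = \<zero>" if "a \<in> carrier R" "a \<otimes> f [^] n = \<zero>" for a
  proof -
    have "a \<otimes> e = \<zero>" using ann that by blast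
    then show ?thesis unfolding e'_def using that(1) e(1) m_assoc[of a e e, symmetric] by simp
  qed
  have "(e \<otimes> e \<ominus> e) \<otimes> f [^] n = e \<otimes> (e \<otimes> f [^] n) \<ominus> e \<otimes> f [^] n" using e(1) fnc by algebra
  also have "\<dots> = \<zero>" using e(1) fnc e(2) by simp
  finally have z1: "(e \<otimes> e \<ominus> e) \<otimes> f [^] n = \<zero>" .
  have "(e \<otimes> e \<ominus> e) \<otimes> e = \<zero>" by (rule ann) (use e(1) z1 in auto)
  then have "e \<otimes> e \<otimes> e \<ominus> e \<otimes> e = \<zero>" using diff_mult[of "e \<otimes> e" e e] e(1) by simp
  then have eee: "e \<otimes> e \<otimes> e = e \<otimes> e" using e(1) r_right_minus_eq[of "e \<otimes> e \<otimes> e" "e \<otimes> e"] by simp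
  have idem: "e' \<otimes> e' = e'" unfolding e'_def using e(1) eee m_assoc[of "e \<otimes> e" e e, symmetric] by simp
  have annk: "\<forall>a\<in>carrier R. a \<otimes> f [^] k = \<zero> \<longrightarrow> a \<otimes> e' = \<zero>" for k :: nat
  proof (induction k rule: less_induct)
    case (less k)
    show ?case
    proof (intro ballI impI)
      fix a assume a: "a \<in> carrier R" "a \<otimes> f [^] k = \<zero>"
      show "a \<otimes> e' = \<zero>"
      proof (cases "k \<le> n")
        case True
        have "a \<otimes> f [^] n = (a \<otimes> f [^] k) \<otimes> f [^] (n - k)"
          using pow_split[OF f True] a(1) f m_assoc[of a "f [^] k" "f [^] (n - k)"] by simp
        then have "a \<otimes> f [^] n = \<zero>" using a f by simp
        then show ?thesis using a ann' by blast
      next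
        case False
        have "f [^] k = f [^] (k - n) \<otimes> f [^] n" using pow_split[OF f, of "k - n" k] False by simp
        then have "(a \<otimes> f [^] (k - n)) \<otimes> f [^] n = a \<otimes> f [^] k"
          using a f m_assoc[of a "f [^] (k - n)" "f [^] n"] by simp
        then have "(a \<otimes> f [^] (k - n)) \<otimes> e' = \<zero>" using ann'[of "a \<otimes> f [^] (k - n)"] a f by simp
        moreover have "(a \<otimes> f [^] (k - n)) \<otimes> e' = (a \<otimes> e') \<otimes> f [^] (k - n)"
          using a(1) e'c nat_pow_closed[OF f, of "k - n"] by (simp add: m_ac)
        ultimately have "(a \<otimes> e') \<otimes> f [^] (k - n) = \<zero>" by simp
        moreover have "k - n < k" using False n by simp
        moreover have "a \<otimes> e' \<in> carrier R" using a e'c by simp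
        ultimately have "(a \<otimes> e') \<otimes> e' = \<zero>" using less by blast
        then show ?thesis using idem a e'c m_assoc[of a e' e'] by simp
      qed
    qed
  qed
  define d where "d = \<one> \<ominus> e'"
  have dc: "d \<in> carrier R" unfolding d_def using e'c by simp
  have "(f \<in> Q \<longrightarrow> d \<notin> Q) \<and> (f \<notin> Q \<longrightarrow> d \<in> Q)" if Q: "Q \<in> min_primes R" for Q
  proof (intro conjI impI)
    have Qp: "primeideal Q R" using Q min_primes_prime by blast
    {
      assume "f \<in> Q"
      then obtain s k where s: "s \<in> carrier R - Q" "s \<otimes> f [^] (k::nat) = \<zero>" using min_prime_elem[OF Q] by blast
      then have "s \<otimes> e' = \<zero>" using annk by blast
      then have "e' \<in> Q" using s primeideal.I_prime[OF Qp, of s e'] e'c prime_zero[OF Qp] by auto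
      then show "d \<notin> Q" unfolding d_def using prime_one_minus[OF Qp] by blast
    }
    {
      assume fQ: "f \<notin> Q"
      have "d \<otimes> f [^] n = f [^] n \<ominus> e' \<otimes> f [^] n" unfolding d_def using e'c fnc by algebra
      then have "d \<otimes> f [^] n = \<zero>" using e'f fnc by simp
      then have "d \<otimes> f [^] n \<in> Q" using prime_zero[OF Qp] by simp
      moreover have "f [^] n \<notin> Q" using prime_pow[OF Qp f] fQ by blast
      ultimately show "d \<in> Q" using primeideal.I_prime[OF Qp dc fnc] by blast
    }
  qed
  then show ?thesis using dc by blast
qed

lemma support_QC:
  assumes H: "\<forall>f\<in>carrier R. \<exists>d\<in>carrier R. \<forall>Q\<in>min_primes R. (f \<in> Q \<longrightarrow> d \<notin> Q) \<and> (f \<notin> Q \<longrightarrow> d \<in> Q)"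
  shows "min_quasi_compact R"
  unfolding min_quasi_compact_def
proof (intro allI impI)
  fix \<U> assume U: "(\<forall>U\<in>\<U>. zariski_open R U) \<and> min_primes R \<subseteq> \<Union>\<U>"
  show "\<exists>\<F>\<subseteq>\<U>. finite \<F> \<and> min_primes R \<subseteq> \<Union>\<F>"
  proof (rule ccontr)
    assume nf: "\<not> (\<exists>\<F>\<subseteq>\<U>. finite \<F> \<and> min_primes R \<subseteq> \<Union>\<F>)"
    define T where "T = {t \<in> carrier R. \<exists>\<F>\<subseteq>\<U>. finite \<F> \<and> (\<forall>Q\<in>min_primes R. Q \<notin> \<Union>\<F> \<longrightarrow> t \<notin> Q)}"
    have "\<exists>Q\<in>min_primes R. Q \<inter> T = {}"
    proof (rule min_prime_disjoint)
      show "T \<subseteq> carrier R" unfolding T_def by blast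
      show "\<one> \<in> T" unfolding T_def using prime_one_notin min_primes_prime by (intro CollectI conjI one_closed exI[of _ "{}"]) auto
      show "\<zero> \<notin> T"
      proof
        assume "\<zero> \<in> T"
        then obtain \<F> where F: "\<F> \<subseteq> \<U>" "finite \<F>" "\<forall>Q\<in>min_primes R. Q \<notin> \<Union>\<F> \<longrightarrow> \<zero> \<notin> Q" unfolding T_def by blast
        obtain Q where "Q \<in> min_primes R" "Q \<notin> \<Union>\<F>" using nf F(1,2) by blast
        then show False using F(3) prime_zero min_primes_prime by blast
      qed
    next
      fix a b assume "a \<in> T" "b \<in> T"
      then obtain \<F>1 \<F>2 where F: "\<F>1 \<subseteq> \<U>" "finite \<F>1" "\<forall>Q\<in>min_primes R. Q \<notin> \<Union>\<F>1 \<longrightarrow> a \<notin> Q"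
        "\<F>2 \<subseteq> \<U>" "finite \<F>2" "\<forall>Q\<in>min_primes R. Q \<notin> \<Union>\<F>2 \<longrightarrow> b \<notin> Q" and ab: "a \<in> carrier R" "b \<in> carrier R"
        unfolding T_def by blast
      have "\<forall>Q\<in>min_primes R. Q \<notin> \<Union>(\<F>1 \<union> \<F>2) \<longrightarrow> a \<otimes> b \<notin> Q"
      proof (intro ballI impI)
        fix Q assume Q: "Q \<in> min_primes R" "Q \<notin> \<Union>(\<F>1 \<union> \<F>2)"
        then have "a \<notin> Q" "b \<notin> Q" using F(3,6) by auto
        then show "a \<otimes> b \<notin> Q" using prime_mult_notin[OF min_primes_prime[OF Q(1)]] ab by blast
      qed
      moreover have "\<F>1 \<union> \<F>2 \<subseteq> \<U>" "finite (\<F>1 \<union> \<F>2)" using F by auto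
      ultimately show "a \<otimes> b \<in> T" unfolding T_def using ab by (intro CollectI conjI m_closed exI[of _ "\<F>1 \<union> \<F>2"]) auto
    qed
    then obtain Q where Q: "Q \<in> min_primes R" "Q \<inter> T = {}" by blast
    have "Q \<in> \<Union>\<U>" using U Q(1) by auto
    then obtain U where UU: "U \<in> \<U>" "Q \<in> U" by (rule UnionE)
    have "zariski_open R U" using U UU(1) by auto
    then obtain S where S: "S \<subseteq> carrier R" "U = {P. primeideal P R \<and> \<not> S \<subseteq> P}" unfolding zariski_open_def by auto
    have "\<not> S \<subseteq> Q" using UU(2) S(2) by simp
    then obtain x where x: "x \<in> S" "x \<notin> Q" by auto
    have xc: "x \<in> carrier R" using x S by blast
    obtain d where d: "d \<in> carrier R" "\<forall>Q\<in>min_primes R. (x \<in> Q \<longrightarrow> d \<notin> Q) \<and> (x \<notin> Q \<longrightarrow> d \<in> Q)"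
      using H xc by blast
    have "d \<in> T"
    proof -
      have "\<forall>Q'\<in>min_primes R. Q' \<notin> \<Union>{U} \<longrightarrow> d \<notin> Q'"
      proof (intro ballI impI)
        fix Q' assume Q': "Q' \<in> min_primes R" "Q' \<notin> \<Union>{U}"
        then have "S \<subseteq> Q'" using S min_primes_prime by auto
        then show "d \<notin> Q'" using d Q' x by blast
      qed
      then show ?thesis unfolding T_def using d UU by (intro CollectI conjI exI[of _ "{U}"]) auto
    qed
    moreover have "d \<in> Q" using d Q x by blast
    ultimately show False using Q by blast
  qed
qed

lemma GPP_QC: "GPP_ring R \<Longrightarrow> min_quasi_compact R"
proof -
  assume "GPP_ring R"
  then have H: "\<forall>f\<in>carrier R. \<exists>n::nat. n \<ge> 1 \<and> (\<exists>e\<in>carrier R. e \<otimes> f [^] n = f [^] n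
     \<and> (\<forall>a\<in>carrier R. a \<otimes> f [^] n = \<zero> \<longrightarrow> a \<otimes> e = \<zero>))" unfolding GPP_iff .
  show ?thesis
  proof (rule support_QC, intro ballI)
    fix f assume f: "f \<in> carrier R"
    then obtain n :: nat and e where "n \<ge> 1" "e \<in> carrier R" "e \<otimes> f [^] n = f [^] n" "\<forall>a\<in>carrier R. a \<otimes> f [^] n = \<zero> \<longrightarrow> a \<otimes> e = \<zero>"
      using H by blast
    then show "\<exists>d\<in>carrier R. \<forall>Q\<in>min_primes R. (f \<in> Q \<longrightarrow> d \<notin> Q) \<and> (f \<notin> Q \<longrightarrow> d \<in> Q)"
      using GPP_support[OF f] by blast
  qed
qed

lemma GPF_QPF: "GPF_ring R \<Longrightarrow> quasi_pf_ring R"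
proof -
  assume "GPF_ring R"
  then have H: "\<forall>f\<in>carrier R. \<exists>n::nat. n \<ge> 1 \<and> (\<forall>a\<in>carrier R. a \<otimes> f [^] n = \<zero> \<longrightarrow>
     (\<exists>e\<in>carrier R. e \<otimes> f [^] n = f [^] n \<and> a \<otimes> e = \<zero>))" unfolding GPF_iff .
  show ?thesis unfolding QPF_iff
  proof (intro ballI impI)
    fix f a assume fa: "f \<in> carrier R" "a \<in> carrier R" "a \<otimes> f = \<zero>"
    obtain n :: nat where n: "n \<ge> 1" "\<forall>b\<in>carrier R. b \<otimes> a [^] n = \<zero> \<longrightarrow> (\<exists>e\<in>carrier R. e \<otimes> a [^] n = a [^] n \<and> b \<otimes> e = \<zero>)"
      using H fa(2) by blast
    have "f \<otimes> a [^] n = (a \<otimes> f) \<otimes> a [^] (n - 1)"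
    proof -
      have "a [^] n = a [^] (1::nat) \<otimes> a [^] (n - 1)" using pow_split[OF fa(2) n(1)] .
      then have "a [^] n = a \<otimes> a [^] (n - 1)" using fa(2) by simp
      moreover have "f \<otimes> (a \<otimes> a [^] (n - 1)) = (a \<otimes> f) \<otimes> a [^] (n - 1)" using fa(1,2) nat_pow_closed[OF fa(2), of "n - 1"] by (simp add: m_ac)
      ultimately show ?thesis by simp
    qed
    then have "f \<otimes> a [^] n = \<zero>" using fa by simp
    then obtain e where e: "e \<in> carrier R" "e \<otimes> a [^] n = a [^] n" "f \<otimes> e = \<zero>" using n(2) fa by blast
    have anc: "a [^] n \<in> carrier R" using fa by simp
    have oe: "(\<one> \<ominus> e) \<otimes> a [^] n = \<zero>"
    proof -
      have "(\<one> \<ominus> e) \<otimes> a [^] n = a [^] n \<ominus> e \<otimes> a [^] n" using e anc by algebra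
      then show ?thesis using e anc by simp
    qed
    have oec: "\<one> \<ominus> e \<in> carrier R" using e by simp
    have "(a \<otimes> (\<one> \<ominus> e)) [^] n = a [^] n \<otimes> (\<one> \<ominus> e) [^] n" using fa oec by (simp add: nat_pow_distrib)
    also have "\<dots> = ((\<one> \<ominus> e) \<otimes> a [^] n) \<otimes> (\<one> \<ominus> e) [^] (n - 1)"
    proof -
      have "(\<one> \<ominus> e) [^] n = (\<one> \<ominus> e) [^] (1::nat) \<otimes> (\<one> \<ominus> e) [^] (n - 1)" using pow_split[OF oec n(1)] .
      then have "(\<one> \<ominus> e) [^] n = (\<one> \<ominus> e) \<otimes> (\<one> \<ominus> e) [^] (n - 1)" using oec by simp
      moreover have "a [^] n \<otimes> ((\<one> \<ominus> e) \<otimes> (\<one> \<ominus> e) [^] (n - 1)) = ((\<one> \<ominus> e) \<otimes> a [^] n) \<otimes> (\<one> \<ominus> e) [^] (n - 1)"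
        using m_rot[OF anc oec nat_pow_closed[OF oec]] .
      ultimately show ?thesis by simp
    qed
    also have "\<dots> = \<zero>" using oe oec by simp
    finally have "nilpotent_el R (a \<otimes> (\<one> \<ominus> e))" unfolding nilpotent_el_def using fa oec by blast
    moreover have "e \<otimes> f = \<zero>" using e fa by (simp add: m_comm)
    ultimately show "\<exists>g\<in>carrier R. g \<otimes> f = \<zero> \<and> nilpotent_el R (a \<otimes> (\<one> \<ominus> g))" using e by blast
  qed
qed

end



context cring begin

lemma prime_pow_in: "primeideal Q R \<Longrightarrow> x \<in> Q \<Longrightarrow> x [^] (Suc m) \<in> Q"
proof -
  assume Q: "primeideal Q R" "x \<in> Q"
  have xc: "x \<in> carrier R" using Q prime_sub by blast
  have "x [^] (Suc m) = x [^] m \<otimes> x" by simp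
  then show ?thesis using prime_lmult[OF Q(1) Q(2), of "x [^] m"] xc by simp
qed

lemma QPF_prim:
  assumes QP: "quasi_pf_ring R" and M: "primeideal M R"
  shows "\<forall>a\<in>carrier R. \<forall>b\<in>carrier R. a \<otimes> b = \<zero> \<longrightarrow>
       (\<exists>u\<in>carrier R - M. u \<otimes> a = \<zero>) \<or> (\<exists>u\<in>carrier R - M. \<exists>k::nat. u \<otimes> b [^] k = \<zero>)"
proof (intro ballI impI)
  fix a b assume ab: "a \<in> carrier R" "b \<in> carrier R" "a \<otimes> b = \<zero>"
  have "b \<otimes> a = \<zero>" using ab by (simp add: m_comm)
  then obtain c where c: "c \<in> carrier R" "c \<otimes> a = \<zero>" "nilpotent_el R (b \<otimes> (\<one> \<ominus> c))"
    using QP ab unfolding QPF_iff by blast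
  show "(\<exists>u\<in>carrier R - M. u \<otimes> a = \<zero>) \<or> (\<exists>u\<in>carrier R - M. \<exists>k::nat. u \<otimes> b [^] k = \<zero>)"
  proof (cases "c \<in> M")
    case False then show ?thesis using c by blast
  next
    case True
    have occ: "\<one> \<ominus> c \<in> carrier R" using c by simp
    then have oc: "\<one> \<ominus> c \<in> carrier R - M" using prime_one_minus[OF M True] by blast
    obtain k :: nat where k: "(b \<otimes> (\<one> \<ominus> c)) [^] k = \<zero>" using c(3) unfolding nilpotent_el_def by blast
    have "(b \<otimes> (\<one> \<ominus> c)) [^] k = b [^] k \<otimes> (\<one> \<ominus> c) [^] k" using ab(2) occ by (simp add: nat_pow_distrib)
    also have "\<dots> = (\<one> \<ominus> c) [^] k \<otimes> b [^] k" using ab(2) occ by (simp add: m_comm)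
    finally have "(\<one> \<ominus> c) [^] k \<otimes> b [^] k = \<zero>" using k by simp
    then show ?thesis using prime_pow_notin[OF M oc] by blast
  qed
qed

lemma QC_use:
  assumes QC: "min_quasi_compact R" and X: "X \<subseteq> carrier R" and cov: "\<forall>Q\<in>min_primes R. \<exists>x\<in>X. x \<notin> Q"
  shows "\<exists>F\<subseteq>X. finite F \<and> (\<forall>Q\<in>min_primes R. \<exists>x\<in>F. x \<notin> Q)"
proof -
  define D where "D x = {P. primeideal P R \<and> \<not> {x} \<subseteq> P}" for x
  have op: "\<forall>U\<in>D ` X. zariski_open R U"
  proof
    fix U assume "U \<in> D ` X"
    then obtain x where x: "x \<in> X" "U = D x" by blast
    then show "zariski_open R U" unfolding zariski_open_def D_def using X by (intro exI[of _ "{x}"]) auto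
  qed
  have cv: "min_primes R \<subseteq> \<Union>(D ` X)"
  proof
    fix Q assume Q: "Q \<in> min_primes R"
    then obtain x where "x \<in> X" "x \<notin> Q" using cov by blast
    moreover have "primeideal Q R" using Q min_primes_prime by blast
    ultimately have "Q \<in> D x" "x \<in> X" unfolding D_def by auto
    then show "Q \<in> \<Union>(D ` X)" by blast
  qed
  obtain \<F> where F: "\<F> \<subseteq> D ` X" "finite \<F>" "min_primes R \<subseteq> \<Union>\<F>"
    using QC[unfolded min_quasi_compact_def, rule_format, of "D ` X"] op cv by blast
  obtain F where F2: "F \<subseteq> X" "finite F" "\<F> = D ` F" using finite_subset_image[OF F(2) F(1)] by blast
  have "\<forall>Q\<in>min_primes R. \<exists>x\<in>F. x \<notin> Q"
  proof
    fix Q assume "Q \<in> min_primes R"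
    then have "Q \<in> \<Union>(D ` F)" using F(3) F2(3) by blast
    then obtain x where "x \<in> F" "Q \<in> D x" by blast
    then show "\<exists>x\<in>F. x \<notin> Q" unfolding D_def by blast
  qed
  then show ?thesis using F2 by blast
qed

lemma build_e:
  assumes QP: "quasi_pf_ring R" and f: "f \<in> carrier R" and G: "finite G" "G \<subseteq> {s \<in> carrier R. \<exists>k::nat. s \<otimes> f [^] k = \<zero>}"
  shows "\<exists>e\<in>carrier R. (\<forall>Q\<in>min_primes R. f \<notin> Q \<longrightarrow> \<one> \<ominus> e \<in> Q) \<and> (\<forall>Q\<in>min_primes R. \<forall>s\<in>G. s \<notin> Q \<longrightarrow> e \<in> Q)"
  using G
proof (induction G rule: finite_induct)
  case empty
  have z: "\<one> \<ominus> \<one> = \<zero>" using r_right_minus_eq[of "\<one>" "\<one>"] by simp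
  have "\<forall>Q\<in>min_primes R. f \<notin> Q \<longrightarrow> \<one> \<ominus> \<one> \<in> Q" unfolding z using prime_zero min_primes_prime by blast
  then show ?case by blast
next
  case (insert s G)
  have IHp: "G \<subseteq> {s \<in> carrier R. \<exists>k::nat. s \<otimes> f [^] k = \<zero>}" using insert.prems by auto
  obtain e where e: "e \<in> carrier R" "\<forall>Q\<in>min_primes R. f \<notin> Q \<longrightarrow> \<one> \<ominus> e \<in> Q"
    "\<forall>Q\<in>min_primes R. \<forall>s\<in>G. s \<notin> Q \<longrightarrow> e \<in> Q" using insert.IH[OF IHp] by (elim bexE conjE) (rule that)
  have "s \<in> {s \<in> carrier R. \<exists>k::nat. s \<otimes> f [^] k = \<zero>}" using insert.prems by auto
  then obtain k :: nat where s: "s \<in> carrier R" "s \<otimes> f [^] k = \<zero>" by auto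
  have fk: "f [^] k \<in> carrier R" using f by simp
  obtain c where c: "c \<in> carrier R" "c \<otimes> f [^] k = \<zero>" "nilpotent_el R (s \<otimes> (\<one> \<ominus> c))"
    using QP[unfolded QPF_iff, rule_format, OF fk s(1) s(2)] by (elim bexE conjE) (rule that)
  define e' where "e' = e \<otimes> (\<one> \<ominus> c)"
  have e'c: "e' \<in> carrier R" unfolding e'_def using e c by simp
  have 1: "\<one> \<ominus> e' \<in> Q" if Q: "Q \<in> min_primes R" "f \<notin> Q" for Q
  proof -
    have Qp: "primeideal Q R" using Q min_primes_prime by blast
    have "c \<otimes> f [^] k \<in> Q" using c prime_zero[OF Qp] by simp
    moreover have "f [^] k \<notin> Q" using prime_pow[OF Qp f] Q by blast
    ultimately have cQ: "c \<in> Q" using primeideal.I_prime[OF Qp c(1)] f by blast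
    have "\<one> \<ominus> e' = (\<one> \<ominus> e) \<oplus> e \<otimes> c" unfolding e'_def using e(1) c(1) by algebra
    moreover have "\<one> \<ominus> e \<in> Q" using e Q by blast
    moreover have "e \<otimes> c \<in> Q" using prime_lmult[OF Qp cQ e(1)] .
    ultimately show ?thesis using prime_add[OF Qp] by simp
  qed
  have 2: "e' \<in> Q" if Q: "Q \<in> min_primes R" "s' \<in> insert s G" "s' \<notin> Q" for Q s'
  proof -
    have Qp: "primeideal Q R" using Q min_primes_prime by blast
    show ?thesis
    proof (cases "s' = s")
      case True
      have "s \<otimes> (\<one> \<ominus> c) \<in> Q" using nil_in_prime[OF Qp c(3)] .
      then have "\<one> \<ominus> c \<in> Q" using primeideal.I_prime[OF Qp s(1)] c Q True by auto
      then show ?thesis unfolding e'_def using prime_lmult[OF Qp _ e(1)] by blast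
    next
      case False
      then have "e \<in> Q" using e Q by blast
      then show ?thesis unfolding e'_def using prime_rmult[OF Qp] c by simp
    qed
  qed
  show ?case
  proof (intro bexI[of _ e'] conjI ballI impI)
    show "e' \<in> carrier R" by fact
    show "\<And>Q. Q \<in> min_primes R \<Longrightarrow> f \<notin> Q \<Longrightarrow> \<one> \<ominus> e' \<in> Q" using 1 by blast
    show "\<And>Q s'. Q \<in> min_primes R \<Longrightarrow> s' \<in> insert s G \<Longrightarrow> s' \<notin> Q \<Longrightarrow> e' \<in> Q" using 2 by blast
  qed
qed

lemma QPF_PPN:
  assumes QP: "quasi_pf_ring R" and QC: "min_quasi_compact R"
  shows PPN
  unfolding PPN_def
proof
  fix f assume f: "f \<in> carrier R"
  let ?X = "insert f {s \<in> carrier R. \<exists>k::nat. s \<otimes> f [^] k = \<zero>}"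
  have cov: "\<forall>Q\<in>min_primes R. \<exists>x\<in>?X. x \<notin> Q"
  proof
    fix Q assume Q: "Q \<in> min_primes R"
    show "\<exists>x\<in>?X. x \<notin> Q"
    proof (cases "f \<in> Q")
      case True
      then obtain s k where sk: "s \<in> carrier R - Q" "s \<otimes> f [^] (k::nat) = \<zero>" using min_prime_elem[OF Q] by blast
      then show ?thesis by (intro bexI[of _ s]) auto
    next
      case False then show ?thesis by (intro bexI[of _ f]) auto
    qed
  qed
  have Xc: "?X \<subseteq> carrier R" using f by auto
  obtain F where F: "F \<subseteq> ?X" "finite F" "\<forall>Q\<in>min_primes R. \<exists>x\<in>F. x \<notin> Q"
    using QC_use[OF QC Xc cov] by blast
  have G: "finite (F - {f})" "F - {f} \<subseteq> {s \<in> carrier R. \<exists>k::nat. s \<otimes> f [^] k = \<zero>}" using F by auto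
  obtain e where e: "e \<in> carrier R" "\<forall>Q\<in>min_primes R. f \<notin> Q \<longrightarrow> \<one> \<ominus> e \<in> Q"
    "\<forall>Q\<in>min_primes R. \<forall>s\<in>F - {f}. s \<notin> Q \<longrightarrow> e \<in> Q"
    using build_e[OF QP f G] by blast
  have n1: "nilpotent_el R (e \<otimes> f \<ominus> f)"
  proof -
    have "e \<otimes> f \<ominus> f \<in> Q" if Q: "Q \<in> min_primes R" for Q
    proof -
      have Qp: "primeideal Q R" using Q min_primes_prime by blast
      show ?thesis
      proof (cases "f \<in> Q")
        case True
        then show ?thesis using prime_minus[OF Qp prime_lmult[OF Qp True e(1)] True] by simp
      next
        case False
        then have "\<one> \<ominus> e \<in> Q" using e Q by blast
        then have "(\<one> \<ominus> e) \<otimes> f \<in> Q" using prime_rmult[OF Qp _ f] by blast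
        then have "\<zero> \<ominus> (\<one> \<ominus> e) \<otimes> f \<in> Q" using prime_minus[OF Qp prime_zero[OF Qp]] by blast
        moreover have "\<zero> \<ominus> (\<one> \<ominus> e) \<otimes> f = e \<otimes> f \<ominus> f" using e(1) f by algebra
        ultimately show ?thesis by simp
      qed
    qed
    moreover have "e \<otimes> f \<ominus> f \<in> carrier R" using e f by simp
    ultimately show ?thesis using nil_iff_min by blast
  qed
  have n2: "nilpotent_el R (a \<otimes> e)" if a: "a \<in> carrier R" "nilpotent_el R (a \<otimes> f)" for a
  proof -
    have "a \<otimes> e \<in> Q" if Q: "Q \<in> min_primes R" for Q
    proof -
      have Qp: "primeideal Q R" using Q min_primes_prime by blast
      have afQ: "a \<otimes> f \<in> Q" using nil_in_prime[OF Qp a(2)] .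
      show ?thesis
      proof (cases "f \<in> Q")
        case False
        then have "a \<in> Q" using primeideal.I_prime[OF Qp a(1) f] afQ by blast
        then show ?thesis using prime_rmult[OF Qp _ e(1)] by blast
      next
        case True
        obtain x where x: "x \<in> F" "x \<notin> Q" using F(3) Q by blast
        then have "x \<in> F - {f}" using True by blast
        then have "e \<in> Q" using e(3) Q x by blast
        then show ?thesis using prime_lmult[OF Qp _ a(1)] by blast
      qed
    qed
    moreover have "a \<otimes> e \<in> carrier R" using a e by simp
    ultimately show ?thesis using nil_iff_min by blast
  qed
  show "\<exists>e\<in>carrier R. nilpotent_el R (e \<otimes> f \<ominus> f) \<and> (\<forall>a\<in>carrier R. nilpotent_el R (a \<otimes> f) \<longrightarrow> nilpotent_el R (a \<otimes> e))"
    using e(1) n1 n2 by blast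
qed

lemma iii_iv:
  assumes QP: "quasi_pf_ring R" and QC: "min_quasi_compact R"
  shows "pp_ring (R Quot nilradical R) \<and> (\<forall>M. maximalideal M R \<longrightarrow> primary_ring (localization R M))"
proof
  show "pp_ring (R Quot nilradical R)" using QPF_PPN[OF QP QC] pp_quot_iff by simp
  show "\<forall>M. maximalideal M R \<longrightarrow> primary_ring (localization R M)"
  proof (intro allI impI)
    fix M assume "maximalideal M R"
    then have M: "primeideal M R" using maximalideal_prime by blast
    show "primary_ring (localization R M)" using primary_loc_iff[OF M] QPF_prim[OF QP M] by simp
  qed
qed

end



context cring begin

lemma comax_step:
  assumes c: "X \<in> carrier R" "x \<in> carrier R" "y \<in> carrier R" "p \<in> carrier R" "q \<in> carrier R" "p' \<in> carrier R" "q' \<in> carrier R"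
  shows "(X \<otimes> x) \<otimes> (p' \<otimes> p) \<oplus> y \<otimes> (X \<otimes> p' \<otimes> q \<oplus> q' \<otimes> (x \<otimes> p \<oplus> y \<otimes> q)) = (X \<otimes> p' \<oplus> y \<otimes> q') \<otimes> (x \<otimes> p \<oplus> y \<otimes> q)"
  using c by algebra

lemma comax_pow1:
  assumes c: "x \<in> carrier R" "y \<in> carrier R" "p \<in> carrier R" "q \<in> carrier R" and eq: "x \<otimes> p \<oplus> y \<otimes> q = \<one>"
  shows "\<exists>p'\<in>carrier R. \<exists>q'\<in>carrier R. x [^] (k::nat) \<otimes> p' \<oplus> y \<otimes> q' = \<one>"
proof (induction k)
  case 0
  have "x [^] (0::nat) \<otimes> \<one> \<oplus> y \<otimes> \<zero> = \<one>" using c by simp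
  then show ?case by blast
next
  case (Suc k)
  then obtain p' q' where pq: "p' \<in> carrier R" "q' \<in> carrier R" "x [^] k \<otimes> p' \<oplus> y \<otimes> q' = \<one>" by blast
  have Xc: "x [^] k \<in> carrier R" using c by simp
  have "x [^] Suc k \<otimes> (p' \<otimes> p) \<oplus> y \<otimes> (x [^] k \<otimes> p' \<otimes> q \<oplus> q' \<otimes> (x \<otimes> p \<oplus> y \<otimes> q))
      = (x [^] k \<otimes> p' \<oplus> y \<otimes> q') \<otimes> (x \<otimes> p \<oplus> y \<otimes> q)"
    using comax_step[OF Xc c(1,2,3,4) pq(1,2)] by simp
  also have "\<dots> = \<one>" using pq(3) eq by simp
  finally have "x [^] Suc k \<otimes> (p' \<otimes> p) \<oplus> y \<otimes> (x [^] k \<otimes> p' \<otimes> q \<oplus> q' \<otimes> (x \<otimes> p \<oplus> y \<otimes> q)) = \<one>" .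
  moreover have "p' \<otimes> p \<in> carrier R" "x [^] k \<otimes> p' \<otimes> q \<oplus> q' \<otimes> (x \<otimes> p \<oplus> y \<otimes> q) \<in> carrier R"
    using pq c Xc by auto
  ultimately show ?case by blast
qed

lemma comax_pow:
  assumes c: "x \<in> carrier R" "y \<in> carrier R" and eq: "x \<oplus> y = \<one>"
  shows "\<exists>p\<in>carrier R. \<exists>q\<in>carrier R. x [^] (k::nat) \<otimes> p \<oplus> y [^] k \<otimes> q = \<one>"
proof -
  have "x \<otimes> \<one> \<oplus> y \<otimes> \<one> = \<one>" using c eq by simp
  then obtain p1 q1 where pq1: "p1 \<in> carrier R" "q1 \<in> carrier R" "x [^] k \<otimes> p1 \<oplus> y \<otimes> q1 = \<one>"
    using comax_pow1[OF c one_closed one_closed] by blast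
  have "y \<otimes> q1 \<oplus> x [^] k \<otimes> p1 = \<one>" using pq1 c by (simp add: a_comm)
  then obtain q2 p2 where pq2: "q2 \<in> carrier R" "p2 \<in> carrier R" "y [^] k \<otimes> q2 \<oplus> x [^] k \<otimes> p2 = \<one>"
    using comax_pow1[OF c(2) nat_pow_closed[OF c(1)] pq1(2) pq1(1)] by blast
  have "x [^] k \<otimes> p2 \<oplus> y [^] k \<otimes> q2 = \<one>" using pq2 c by (simp add: a_comm)
  then show ?thesis using pq2 by blast
qed

lemma idem_from:
  assumes c: "E \<in> carrier R" "F \<in> carrier R" "p \<in> carrier R" "q \<in> carrier R" and EF: "E \<otimes> F = \<zero>" and eq: "E \<otimes> p \<oplus> F \<otimes> q = \<one>"
  shows "(E \<otimes> p) \<otimes> (E \<otimes> p) = E \<otimes> p" and "\<one> \<ominus> E \<otimes> p = F \<otimes> q"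
proof -
  have "E \<otimes> p = (E \<otimes> p) \<otimes> (E \<otimes> p \<oplus> F \<otimes> q)" using eq c by simp
  also have "\<dots> = (E \<otimes> p) \<otimes> (E \<otimes> p) \<oplus> (E \<otimes> F) \<otimes> (p \<otimes> q)" using c by algebra
  also have "\<dots> = (E \<otimes> p) \<otimes> (E \<otimes> p)" using EF c by simp
  finally show "(E \<otimes> p) \<otimes> (E \<otimes> p) = E \<otimes> p" by simp
  have "\<one> \<ominus> E \<otimes> p = (E \<otimes> p \<oplus> F \<otimes> q) \<ominus> E \<otimes> p" using eq by simp
  also have "\<dots> = F \<otimes> q" using c by algebra
  finally show "\<one> \<ominus> E \<otimes> p = F \<otimes> q" .
qed

lemma iv_i:
  assumes pp: "pp_ring (R Quot nilradical R)" and prim: "\<forall>M. maximalideal M R \<longrightarrow> primary_ring (localization R M)"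
  shows "GPP_ring R"
proof -
  have PP: PPN using pp pp_quot_iff by simp
  have Prim: "(\<exists>u\<in>carrier R - M. u \<otimes> a = \<zero>) \<or> (\<exists>u\<in>carrier R - M. \<exists>k::nat. u \<otimes> b [^] k = \<zero>)"
    if "maximalideal M R" "a \<in> carrier R" "b \<in> carrier R" "a \<otimes> b = \<zero>" for M a b
  proof -
    have M: "primeideal M R" using maximalideal_prime that(1) by blast
    have "primary_ring (localization R M)" using prim that(1) by blast
    then show ?thesis using primary_loc_iff[OF M] that(2-4) by blast
  qed
  show ?thesis unfolding GPP_iff
  proof
    fix f assume f: "f \<in> carrier R"
    obtain e where e: "e \<in> carrier R" "nilpotent_el R (e \<otimes> f \<ominus> f)"
      "\<And>a. a \<in> carrier R \<Longrightarrow> nilpotent_el R (a \<otimes> f) \<Longrightarrow> nilpotent_el R (a \<otimes> e)"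
      using PP f unfolding PPN_def by blast
    have oec: "\<one> \<ominus> e \<in> carrier R" using e by simp
    have n1: "nilpotent_el R ((\<one> \<ominus> e) \<otimes> f)"
    proof -
      have "(\<one> \<ominus> e) \<otimes> f \<in> Q" if Q: "Q \<in> min_primes R" for Q
      proof -
        have Qp: "primeideal Q R" using Q min_primes_prime by blast
        have "e \<otimes> f \<ominus> f \<in> Q" using nil_in_prime[OF Qp e(2)] .
        then have "\<zero> \<ominus> (e \<otimes> f \<ominus> f) \<in> Q" using prime_minus[OF Qp prime_zero[OF Qp]] by blast
        moreover have "\<zero> \<ominus> (e \<otimes> f \<ominus> f) = (\<one> \<ominus> e) \<otimes> f" using e(1) f by algebra
        ultimately show ?thesis by simp
      qed
      moreover have "(\<one> \<ominus> e) \<otimes> f \<in> carrier R" using oec f by simp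
      ultimately show ?thesis using nil_iff_min by blast
    qed
    have "nilpotent_el R ((\<one> \<ominus> e) \<otimes> e)" using e(3)[OF oec n1] .
    then have n2: "nilpotent_el R (e \<otimes> (\<one> \<ominus> e))" using e(1) oec by (simp add: m_comm)
    obtain i :: nat where i: "((\<one> \<ominus> e) \<otimes> f) [^] i = \<zero>" using n1 unfolding nilpotent_el_def by blast
    obtain j :: nat where j: "(e \<otimes> (\<one> \<ominus> e)) [^] j = \<zero>" using n2 unfolding nilpotent_el_def by blast
    define J where "J = Suc (i + j)"
    have z1: "((\<one> \<ominus> e) \<otimes> f) [^] J = \<zero>" using pow_zero_mono[OF _ i] oec f unfolding J_def by simp
    have z2: "(e \<otimes> (\<one> \<ominus> e)) [^] J = \<zero>" using pow_zero_mono[OF _ j] oec e(1) unfolding J_def by simp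
    have "e \<oplus> (\<one> \<ominus> e) = \<one>" using e(1) by algebra
    then obtain p q where pq: "p \<in> carrier R" "q \<in> carrier R" "e [^] J \<otimes> p \<oplus> (\<one> \<ominus> e) [^] J \<otimes> q = \<one>"
      using comax_pow[OF e(1) oec] by blast
    have EJ: "e [^] J \<in> carrier R" "(\<one> \<ominus> e) [^] J \<in> carrier R" using e(1) oec by auto
    have EF: "e [^] J \<otimes> (\<one> \<ominus> e) [^] J = \<zero>" using z2 e(1) oec by (simp add: nat_pow_distrib)
    define d where "d = e [^] J \<otimes> p"
    have dc: "d \<in> carrier R" unfolding d_def using EJ pq by simp
    have idem: "d \<otimes> d = d" unfolding d_def using idem_from(1)[OF EJ pq(1,2) EF pq(3)] .
    have omd: "\<one> \<ominus> d = (\<one> \<ominus> e) [^] J \<otimes> q" unfolding d_def using idem_from(2)[OF EJ pq(1,2) EF pq(3)] .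
    have fJ: "f [^] J \<in> carrier R" using f by simp
    have df: "d \<otimes> f [^] J = f [^] J"
    proof -
      have "(\<one> \<ominus> d) \<otimes> f [^] J = q \<otimes> ((\<one> \<ominus> e) [^] J \<otimes> f [^] J)"
        unfolding omd using EJ pq fJ by (simp add: m_ac)
      also have "(\<one> \<ominus> e) [^] J \<otimes> f [^] J = ((\<one> \<ominus> e) \<otimes> f) [^] J" using oec f by (simp add: nat_pow_distrib)
      finally have "(\<one> \<ominus> d) \<otimes> f [^] J = \<zero>" using z1 pq by simp
      moreover have "(\<one> \<ominus> d) \<otimes> f [^] J = f [^] J \<ominus> d \<otimes> f [^] J" using dc fJ by algebra
      ultimately have "f [^] J \<ominus> d \<otimes> f [^] J = \<zero>" by simp
      then show ?thesis using dc fJ r_right_minus_eq[of "f [^] J" "d \<otimes> f [^] J"] by simp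
    qed
    have ann: "a \<otimes> d = \<zero>" if a: "a \<in> carrier R" "a \<otimes> f [^] J = \<zero>" for a
    proof (rule local_global_zero)
      show "a \<otimes> d \<in> carrier R" using a dc by simp
      fix M assume Mm: "maximalideal M R"
      have M: "primeideal M R" using maximalideal_prime Mm by blast
      have "(\<exists>u\<in>carrier R - M. u \<otimes> a = \<zero>) \<or> (\<exists>u\<in>carrier R - M. \<exists>k::nat. u \<otimes> (f [^] J) [^] k = \<zero>)"
        using Prim[OF Mm a(1) fJ a(2)] .
      then show "\<exists>u\<in>carrier R - M. u \<otimes> (a \<otimes> d) = \<zero>"
      proof
        assume "\<exists>u\<in>carrier R - M. u \<otimes> a = \<zero>"
        then obtain u where u: "u \<in> carrier R - M" "u \<otimes> a = \<zero>" by blast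
        have uc: "u \<in> carrier R" using u by blast
        have "u \<otimes> (a \<otimes> d) = (u \<otimes> a) \<otimes> d" using m_assoc[OF uc a(1) dc] by simp
        then show ?thesis using u dc by auto
      next
        assume "\<exists>u\<in>carrier R - M. \<exists>k::nat. u \<otimes> (f [^] J) [^] k = \<zero>"
        then obtain u k where u: "u \<in> carrier R - M" "u \<otimes> (f [^] J) [^] (k::nat) = \<zero>" by blast
        have uc: "u \<in> carrier R" using u by blast
        have nuf: "nilpotent_el R (u \<otimes> f)"
        proof -
          have "u \<otimes> f \<in> Q" if Q: "Q \<in> min_primes R" for Q
          proof -
            have Qp: "primeideal Q R" using Q min_primes_prime by blast
            have "u \<otimes> (f [^] J) [^] k \<in> Q" using u prime_zero[OF Qp] by simp
            then have "u \<in> Q \<or> (f [^] J) [^] k \<in> Q" using primeideal.I_prime[OF Qp uc] fJ by simp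
            then have "u \<in> Q \<or> f \<in> Q" using prime_pow[OF Qp fJ] prime_pow[OF Qp f] by blast
            then show ?thesis using prime_rmult[OF Qp _ f] prime_lmult[OF Qp _ uc] by blast
          qed
          moreover have "u \<otimes> f \<in> carrier R" using uc f by simp
          ultimately show ?thesis using nil_iff_min by blast
        qed
        have nue: "nilpotent_el R (u \<otimes> e)" using e(3)[OF uc nuf] .
        have nud: "nilpotent_el R (u \<otimes> d)"
        proof -
          have "u \<otimes> d \<in> Q" if Q: "Q \<in> min_primes R" for Q
          proof -
            have Qp: "primeideal Q R" using Q min_primes_prime by blast
            have "u \<otimes> e \<in> Q" using nil_in_prime[OF Qp nue] .
            then have "u \<in> Q \<or> e \<in> Q" using primeideal.I_prime[OF Qp uc e(1)] by simp
            moreover have "e \<in> Q \<Longrightarrow> d \<in> Q"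
            proof -
              assume "e \<in> Q"
              then have "e [^] J \<in> Q" unfolding J_def using prime_pow_in[OF Qp] by blast
              then show "d \<in> Q" unfolding d_def using prime_rmult[OF Qp _ pq(1)] by blast
            qed
            ultimately show ?thesis using prime_rmult[OF Qp _ dc] prime_lmult[OF Qp _ uc] by blast
          qed
          moreover have "u \<otimes> d \<in> carrier R" using uc dc by simp
          ultimately show ?thesis using nil_iff_min by blast
        qed
        obtain l :: nat where l: "(u \<otimes> d) [^] l = \<zero>" using nud unfolding nilpotent_el_def by blast
        have "(u \<otimes> d) [^] (Suc l) = \<zero>" using pow_zero_mono[OF _ l] uc dc by simp
        moreover have "(u \<otimes> d) [^] (Suc l) = u [^] (Suc l) \<otimes> d [^] (Suc l)" using nat_pow_distrib[OF uc dc] .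
        ultimately have "u [^] (Suc l) \<otimes> d [^] (Suc l) = \<zero>" by simp
        then have v: "u [^] (Suc l) \<otimes> d = \<zero>" using pow_idem[OF dc idem] by simp
        have vM: "u [^] (Suc l) \<in> carrier R - M" using prime_pow_notin[OF M u(1)] .
        have "u [^] (Suc l) \<otimes> (a \<otimes> d) = a \<otimes> (u [^] (Suc l) \<otimes> d)"
          using m_lcomm[of "u [^] (Suc l)" a d] uc a dc by simp
        then have "u [^] (Suc l) \<otimes> (a \<otimes> d) = \<zero>" using v a by simp
        then show ?thesis using vM by blast
      qed
    qed
    have "J \<ge> 1" unfolding J_def by simp
    then show "\<exists>n::nat. n \<ge> 1 \<and> (\<exists>e\<in>carrier R. e \<otimes> f [^] n = f [^] n \<and> (\<forall>a\<in>carrier R. a \<otimes> f [^] n = \<zero> \<longrightarrow> a \<otimes> e = \<zero>))"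
      using dc df ann by blast
  qed
qed

end

theorem theorem5p4:
  fixes R :: "'a ring"
  assumes "cring R"
  shows "(GPP_ring R \<longleftrightarrow> GPF_ring R \<and> min_quasi_compact R)
       \<and> (GPF_ring R \<and> min_quasi_compact R \<longleftrightarrow> quasi_pf_ring R \<and> min_quasi_compact R)
       \<and> (quasi_pf_ring R \<and> min_quasi_compact R \<longleftrightarrow>
            pp_ring (R Quot (nilradical R))
          \<and> (\<forall>M. maximalideal M R \<longrightarrow> primary_ring (localization R M)))"
proof -
  interpret cring R by fact
  have i_ii: "GPP_ring R \<Longrightarrow> GPF_ring R \<and> min_quasi_compact R" using GPP_GPF GPP_QC by blast
  have ii_iii: "GPF_ring R \<Longrightarrow> quasi_pf_ring R" using GPF_QPF by blast
  have iii_iv: "quasi_pf_ring R \<Longrightarrow> min_quasi_compact R \<Longrightarrow> pp_ring (R Quot (nilradical R))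
          \<and> (\<forall>M. maximalideal M R \<longrightarrow> primary_ring (localization R M))" using iii_iv by blast
  have iv_i: "pp_ring (R Quot (nilradical R)) \<Longrightarrow> (\<forall>M. maximalideal M R \<longrightarrow> primary_ring (localization R M)) \<Longrightarrow> GPP_ring R"
    using iv_i by blast
  show ?thesis using i_ii ii_iii iii_iv iv_i by blast
qed


end
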